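(* Let $G$ be a locally compact group and $1<p<\infty$. If there exists $u\neq 0$ in $B_p(G)$ such that the multiplication operator $\Gamma_u:A_p(G)\to A_p(G)$, $\Gamma_u(v)=uv$, is weakly compact (in particular, if it is compact), then $G$ is discrete.
   Context: For $1<p<\infty$ and $\frac1p+\frac1q=1$, the Herz algebra $A_p(G)$ is the space of functions $u=\sum_{i=1}^\infty g_i*f_i^{\vee}$ with $f_i\in L^p(G)$, $g_i\in L^q(G)$, $\sum_i\|f_i\|_p\|g_i\|_q<\infty$, where $f^\vee(x)=f(x^{-1})$ and convolution is with respect to a left Haar measure; it is a commutative Banach algebra under pointwise multiplication with norm $\|u\|_{A_p}=\inf\sum_i\|f_i\|_p\|g_i\|_q$. $B_p(G)$ is the set of bounded continuous functions $u$ on $G$ with $uv\in A_p(G)$ for all $v\in A_p(G)$, normed by $\|u\|=\sup\{\|uv\|_{A_p}:\|v\|_{A_p}\le 1\}$. *)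

theory Defs
  imports "HOL-Analysis.Analysis"
begin

text \<open>Groups are written additively (Isabelle class group_add, NOT assumed commutative):
  x + y is the group product, -x the inverse, 0 the identity.\<close>

definition lc_group :: "'a::{topological_group_add, t2_space} itself \<Rightarrow> bool" where
  "lc_group _ \<longleftrightarrow> locally_compact_space (euclidean :: 'a topology)"

definition left_haar :: "'a::{topological_group_add, t2_space} measure \<Rightarrow> bool" where
  "left_haar \<mu> \<longleftrightarrow>
     sets \<mu> = sets borel \<and>
     (\<forall>x A. A \<in> sets borel \<longrightarrow> emeasure \<mu> ((\<lambda>y. x + y) ` A) = emeasure \<mu> A) \<and>
     (\<forall>K. compact K \<longrightarrow> emeasure \<mu> K < \<infinity>) \<and>
     (\<forall>U. open U \<and> U \<noteq> {} \<longrightarrow> emeasure \<mu> U > 0) \<and>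
     (\<forall>A \<in> sets borel. emeasure \<mu> A = (INF U \<in> {U. open U \<and> A \<subseteq> U}. emeasure \<mu> U)) \<and>
     (\<forall>U. open U \<longrightarrow> emeasure \<mu> U = (SUP K \<in> {K. compact K \<and> K \<subseteq> U}. emeasure \<mu> K))"

definition in_Lp :: "'a measure \<Rightarrow> real \<Rightarrow> ('a \<Rightarrow> complex) \<Rightarrow> bool" where
  "in_Lp \<mu> p f \<longleftrightarrow> f \<in> borel_measurable \<mu> \<and> integrable \<mu> (\<lambda>x. norm (f x) powr p)"

definition Lp_norm :: "'a measure \<Rightarrow> real \<Rightarrow> ('a \<Rightarrow> complex) \<Rightarrow> real" where
  "Lp_norm \<mu> p f = (\<integral>x. norm (f x) powr p \<partial>\<mu>) powr (1 / p)"

definition check :: "('a::group_add \<Rightarrow> 'b) \<Rightarrow> 'a \<Rightarrow> 'b" where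
  "check f x = f (- x)"

definition conv :: "'a::group_add measure \<Rightarrow> ('a \<Rightarrow> complex) \<Rightarrow> ('a \<Rightarrow> complex) \<Rightarrow> 'a \<Rightarrow> complex" where
  "conv \<mu> f g x = (\<integral>y. f y * g (- y + x) \<partial>\<mu>)"

definition conj_exp :: "real \<Rightarrow> real" where
  "conj_exp p = p / (p - 1)"

definition Ap_rep :: "'a::group_add measure \<Rightarrow> real \<Rightarrow> ('a \<Rightarrow> complex)
    \<Rightarrow> (nat \<Rightarrow> 'a \<Rightarrow> complex) \<Rightarrow> (nat \<Rightarrow> 'a \<Rightarrow> complex) \<Rightarrow> bool" where
  "Ap_rep \<mu> p u f g \<longleftrightarrow>
     (\<forall>i. in_Lp \<mu> p (f i) \<and> in_Lp \<mu> (conj_exp p) (g i)) \<and>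
     summable (\<lambda>i. Lp_norm \<mu> p (f i) * Lp_norm \<mu> (conj_exp p) (g i)) \<and>
     (\<forall>x. u x = (\<Sum>i. conv \<mu> (g i) (check (f i)) x))"

definition Ap :: "'a::group_add measure \<Rightarrow> real \<Rightarrow> ('a \<Rightarrow> complex) set" where
  "Ap \<mu> p = {u. \<exists>f g. Ap_rep \<mu> p u f g}"

definition Ap_norm :: "'a::group_add measure \<Rightarrow> real \<Rightarrow> ('a \<Rightarrow> complex) \<Rightarrow> real" where
  "Ap_norm \<mu> p u = Inf {\<Sum>i. Lp_norm \<mu> p (f i) * Lp_norm \<mu> (conj_exp p) (g i) | f g. Ap_rep \<mu> p u f g}"

definition Bp :: "'a::{topological_group_add} measure \<Rightarrow> real \<Rightarrow> ('a \<Rightarrow> complex) set" where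
  "Bp \<mu> p = {u. continuous_on UNIV u \<and> bounded (range u) \<and>
                 (\<forall>v \<in> Ap \<mu> p. (\<lambda>x. u x * v x) \<in> Ap \<mu> p)}"

definition Ap_dual :: "'a::group_add measure \<Rightarrow> real \<Rightarrow> (('a \<Rightarrow> complex) \<Rightarrow> complex) set" where
  "Ap_dual \<mu> p = {\<phi>.
     (\<forall>v \<in> Ap \<mu> p. \<forall>w \<in> Ap \<mu> p. \<forall>a b::complex.
        \<phi> (\<lambda>x. a * v x + b * w x) = a * \<phi> v + b * \<phi> w) \<and>
     (\<exists>C. \<forall>v \<in> Ap \<mu> p. norm (\<phi> v) \<le> C * Ap_norm \<mu> p v)}"

definition Ap_weak :: "'a::group_add measure \<Rightarrow> real \<Rightarrow> ('a \<Rightarrow> complex) topology" where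
  "Ap_weak \<mu> p = topology_generated_by
     {{v \<in> Ap \<mu> p. \<phi> v \<in> U} | \<phi> U. \<phi> \<in> Ap_dual \<mu> p \<and> open U}"

definition Ap_weakly_compact_op :: "'a::group_add measure \<Rightarrow> real
    \<Rightarrow> (('a \<Rightarrow> complex) \<Rightarrow> ('a \<Rightarrow> complex)) \<Rightarrow> bool" where
  "Ap_weakly_compact_op \<mu> p T \<longleftrightarrow>
     compactin (Ap_weak \<mu> p) (Ap_weak \<mu> p closure_of (T ` {v \<in> Ap \<mu> p. Ap_norm \<mu> p v \<le> 1}))"

end

theory Submission
  imports Defs
begin

lemma conj_exp_gt1: "1 < p \<Longrightarrow> 1 < conj_exp p"
  by (simp add: conj_exp_def)

lemma conj_exp_sum: "1 < p \<Longrightarrow> 1/p + 1/conj_exp p = 1"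
  by (simp add: conj_exp_def field_simps)

lemma Lp_norm_nonneg: "Lp_norm M p f \<ge> 0"
  by (simp add: Lp_norm_def)

lemma holder_real:
  fixes f g :: "'b \<Rightarrow> real"
  assumes p: "1 < p" "1 < q" "1/p + 1/q = 1"
    and fm: "f \<in> borel_measurable M" and gm: "g \<in> borel_measurable M"
    and f0: "\<And>x. f x \<ge> 0" and g0: "\<And>x. g x \<ge> 0"
    and fi: "integrable M (\<lambda>x. f x powr p)" and gi: "integrable M (\<lambda>x. g x powr q)"
  shows "integrable M (\<lambda>x. f x * g x)"
    "(\<integral>x. f x * g x \<partial>M) \<le> (\<integral>x. f x powr p \<partial>M) powr (1/p) * (\<integral>x. g x powr q \<partial>M) powr (1/q)"
proof -
  define A where "A = (\<integral>x. f x powr p \<partial>M)"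
  define B where "B = (\<integral>x. g x powr q \<partial>M)"
  have A0: "A \<ge> 0" "B \<ge> 0" unfolding A_def B_def by (auto intro!: integral_nonneg_AE)
  have "integrable M (\<lambda>x. f x * g x) \<and> (\<integral>x. f x * g x \<partial>M) \<le> A powr (1/p) * B powr (1/q)"
  proof (cases "A = 0 \<or> B = 0")
    case True
    have "AE x in M. f x * g x = 0"
    proof (cases "A = 0")
      case True
      then have "AE x in M. f x powr p = 0" unfolding A_def
        using integral_nonneg_eq_0_iff_AE[OF fi] by simp
      then show ?thesis by eventually_elim simp
    next
      case False
      then have "B = 0" using \<open>A = 0 \<or> B = 0\<close> by simp
      then have "AE x in M. g x powr q = 0" unfolding B_def
        using integral_nonneg_eq_0_iff_AE[OF gi] by simp
      then show ?thesis by eventually_elim simp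
    qed
    then have e: "AE x in M. f x * g x = 0" .
    have i: "integrable M (\<lambda>x. f x * g x)"
      apply (rule integrable_cong_AE_imp[of M "\<lambda>x. 0"])
        apply simp
       apply (rule borel_measurable_times[OF fm gm])
      using e by (auto elim: eventually_mono)
    have "(\<integral>x. f x * g x \<partial>M) = (\<integral>x. 0 \<partial>M)"
      using e borel_measurable_times[OF fm gm] by (intro integral_cong_AE) auto
    then show ?thesis using i by simp
  next
    case False
    then have Ap: "A > 0" "B > 0" using A0 by auto
    define a where "a = A powr (1/p)"
    define b where "b = B powr (1/q)"
    have ap: "a > 0" "b > 0" using Ap by (auto simp: a_def b_def)
    have apow: "a powr p = A" "b powr q = B" using Ap p by (auto simp: a_def b_def powr_powr)
    have pw: "f x * g x \<le> a * b * (f x powr p / (p * A) + g x powr q / (q * B))" for x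
    proof -
      have "(f x / a) * (g x / b) \<le> (f x / a) powr p / p + (g x / b) powr q / q"
        using Youngs_inequality[of p q "f x / a" "g x / b"] p f0 g0 ap by auto
      also have "\<dots> = f x powr p / (p * A) + g x powr q / (q * B)"
        using f0 g0 ap apow by (simp add: powr_divide mult.commute)
      finally show ?thesis using ap by (simp add: field_simps)
    qed
    have bi: "integrable M (\<lambda>x. a * b * (f x powr p / (p * A) + g x powr q / (q * B)))"
      using fi gi by auto
    have i: "integrable M (\<lambda>x. f x * g x)"
      apply (rule Bochner_Integration.integrable_bound[OF bi])
      using fm gm apply measurable
      using pw f0 g0 ap p
      by (auto intro!: AE_I2 simp: abs_mult intro!: order_trans[OF _ mult_left_mono[OF abs_ge_self]])
    have "(\<integral>x. f x * g x \<partial>M) \<le> (\<integral>x. a * b * (f x powr p / (p * A) + g x powr q / (q * B)) \<partial>M)"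
      by (rule integral_mono[OF i bi pw])
    also have "\<dots> = a * b * ((\<integral>x. f x powr p \<partial>M) / (p * A) + (\<integral>x. g x powr q \<partial>M) / (q * B))"
      using fi gi by simp
    also have "\<dots> = a * b * (1/p + 1/q)" unfolding A_def[symmetric] B_def[symmetric] using Ap by simp
    finally show ?thesis using i p by (simp add: a_def b_def)
  qed
  then show "integrable M (\<lambda>x. f x * g x)"
    "(\<integral>x. f x * g x \<partial>M) \<le> (\<integral>x. f x powr p \<partial>M) powr (1/p) * (\<integral>x. g x powr q \<partial>M) powr (1/q)"
    by (auto simp: A_def B_def)
qed


locale haar =
  fixes \<mu> :: "'a::{topological_group_add, t2_space} measure"
  assumes H: "left_haar \<mu>"
begin

lemma sets_mu: "sets \<mu> = sets borel"
  using H by (simp add: left_haar_def)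

lemma inv_mu: "A \<in> sets borel \<Longrightarrow> emeasure \<mu> ((\<lambda>y. x + y) ` A) = emeasure \<mu> A"
  using H[unfolded left_haar_def, THEN conjunct2, THEN conjunct1] by simp

lemma compact_fin: "compact K \<Longrightarrow> emeasure \<mu> K < \<infinity>"
  using H[unfolded left_haar_def, THEN conjunct2, THEN conjunct2, THEN conjunct1] by simp

lemma open_pos: "open U \<Longrightarrow> U \<noteq> {} \<Longrightarrow> emeasure \<mu> U > 0"
  using H[unfolded left_haar_def, THEN conjunct2, THEN conjunct2, THEN conjunct2, THEN conjunct1] by simp

lemma outer_reg: "A \<in> sets borel \<Longrightarrow> emeasure \<mu> A = (INF U \<in> {U. open U \<and> A \<subseteq> U}. emeasure \<mu> U)"
  using H[unfolded left_haar_def, THEN conjunct2, THEN conjunct2, THEN conjunct2, THEN conjunct2, THEN conjunct1] by simp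

lemma inner_reg: "open U \<Longrightarrow> emeasure \<mu> U = (SUP K \<in> {K. compact K \<and> K \<subseteq> U}. emeasure \<mu> K)"
  using H[unfolded left_haar_def, THEN conjunct2, THEN conjunct2, THEN conjunct2, THEN conjunct2, THEN conjunct2] by simp

lemma space_mu[simp]: "space \<mu> = UNIV"
  using sets_eq_imp_space_eq[OF sets_mu] by simp

lemma meas_mu: "f \<in> borel_measurable \<mu> \<longleftrightarrow> f \<in> borel_measurable borel"
  by (simp add: measurable_cong_sets[OF sets_mu refl])

lemma cont_meas: "continuous_on UNIV f \<Longrightarrow> f \<in> borel_measurable \<mu>"
  using meas_mu borel_measurable_continuous_onI by blast

lemma transl_meas_mu: "(\<lambda>y. a + y) \<in> measurable \<mu> \<mu>"
proof -
  have "(\<lambda>y::'a. a + y) \<in> borel_measurable borel"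
    by (intro borel_measurable_continuous_onI continuous_intros)
  then show ?thesis using measurable_cong_sets[OF sets_mu sets_mu] by blast
qed

lemma transl_comp_meas:
  assumes "f \<in> borel_measurable \<mu>" shows "(\<lambda>y. f (a + y)) \<in> borel_measurable \<mu>"
  using measurable_comp[OF transl_meas_mu assms] by (simp add: comp_def)

lemma distr_transl: "distr \<mu> \<mu> (\<lambda>y. a + y) = \<mu>"
proof (rule measure_eqI)
  show "sets (distr \<mu> \<mu> (\<lambda>y. a + y)) = sets \<mu>" by simp
  fix A assume A: "A \<in> sets (distr \<mu> \<mu> (\<lambda>y. a + y))"
  then have Ab: "A \<in> sets borel" using sets_mu by simp
  have eq: "(\<lambda>y. a + y) -` A \<inter> space \<mu> = (\<lambda>y. - a + y) ` A"
  proof (intro set_eqI iffI)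
    fix x assume "x \<in> (\<lambda>y. a + y) -` A \<inter> space \<mu>"
    then have "a + x \<in> A" by simp
    moreover have "x = - a + (a + x)" by simp
    ultimately show "x \<in> (\<lambda>y. - a + y) ` A" by blast
  qed auto
  have "emeasure (distr \<mu> \<mu> (\<lambda>y. a + y)) A = emeasure \<mu> ((\<lambda>y. a + y) -` A \<inter> space \<mu>)"
    by (rule emeasure_distr[OF transl_meas_mu]) (use A in simp)
  also have "\<dots> = emeasure \<mu> ((\<lambda>y. - a + y) ` A)"
    by (simp only: eq)
  also have "\<dots> = emeasure \<mu> A"
    using inv_mu[OF Ab] .
  finally show "emeasure (distr \<mu> \<mu> (\<lambda>y. a + y)) A = emeasure \<mu> A" .
qed

lemma integral_transl:
  fixes f :: "'a \<Rightarrow> 'b::{banach, second_countable_topology}"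
  assumes "f \<in> borel_measurable \<mu>"
  shows "(\<integral>y. f (a + y) \<partial>\<mu>) = (\<integral>y. f y \<partial>\<mu>)"
  using integral_distr[OF transl_meas_mu assms, of a] by (simp add: distr_transl)

lemma integrable_transl:
  fixes f :: "'a \<Rightarrow> 'b::{banach, second_countable_topology}"
  assumes "f \<in> borel_measurable \<mu>"
  shows "integrable \<mu> (\<lambda>y. f (a + y)) \<longleftrightarrow> integrable \<mu> f"
  using integrable_distr_eq[OF transl_meas_mu assms, of a] by (simp add: distr_transl)

lemma in_Lp_transl:
  assumes "in_Lp \<mu> p f"
  shows "in_Lp \<mu> p (\<lambda>y. f (a + y))" "Lp_norm \<mu> p (\<lambda>y. f (a + y)) = Lp_norm \<mu> p f"
proof -
  have fm: "f \<in> borel_measurable \<mu>" and fi: "integrable \<mu> (\<lambda>x. norm (f x) powr p)"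
    using assms by (auto simp: in_Lp_def)
  have gm: "(\<lambda>x. norm (f x) powr p) \<in> borel_measurable \<mu>"
    using borel_measurable_continuous_on[OF continuous_on_norm_id fm] by (intro powr_real_measurable) auto
  show "in_Lp \<mu> p (\<lambda>y. f (a + y))"
    unfolding in_Lp_def using transl_comp_meas[OF fm] integrable_transl[OF gm] fi by simp
  show "Lp_norm \<mu> p (\<lambda>y. f (a + y)) = Lp_norm \<mu> p f"
    unfolding Lp_norm_def using integral_transl[OF gm] by simp
qed

lemma conv_check: "conv \<mu> g (check f) x = (\<integral>y. g y * f (- x + y) \<partial>\<mu>)"
  unfolding conv_def check_def by (simp only: minus_add minus_minus)

lemma conv_bound:
  assumes p: "1 < p" and f: "in_Lp \<mu> p f" and g: "in_Lp \<mu> (conj_exp p) g"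
  shows "integrable \<mu> (\<lambda>y. g y * f (- x + y))"
    "norm (conv \<mu> g (check f) x) \<le> Lp_norm \<mu> p f * Lp_norm \<mu> (conj_exp p) g"
proof -
  let ?q = "conj_exp p"
  have f': "in_Lp \<mu> p (\<lambda>y. f (- x + y))" and nf: "Lp_norm \<mu> p (\<lambda>y. f (- x + y)) = Lp_norm \<mu> p f"
    using in_Lp_transl[OF f] by auto
  have fm: "(\<lambda>y. f (- x + y)) \<in> borel_measurable \<mu>" and gm: "g \<in> borel_measurable \<mu>"
    using f' g by (auto simp: in_Lp_def)
  note h = holder_real[of p ?q "\<lambda>y. norm (f (- x + y))" \<mu> "\<lambda>y. norm (g y)"]
  have hyp: "1 < p" "1 < ?q" "1/p + 1/?q = 1"
    using p conj_exp_gt1 conj_exp_sum by auto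
  have h1: "integrable \<mu> (\<lambda>y. norm (f (- x + y)) * norm (g y))"
   and h2: "(\<integral>y. norm (f (- x + y)) * norm (g y) \<partial>\<mu>) \<le> Lp_norm \<mu> p f * Lp_norm \<mu> ?q g"
  proof -
    have a1: "(\<lambda>y. norm (f (- x + y))) \<in> borel_measurable \<mu>" "(\<lambda>y. norm (g y)) \<in> borel_measurable \<mu>"
      using borel_measurable_continuous_on[OF continuous_on_norm_id fm]
        borel_measurable_continuous_on[OF continuous_on_norm_id gm] by auto
    have a2: "integrable \<mu> (\<lambda>y. norm (f (- x + y)) powr p)" "integrable \<mu> (\<lambda>y. norm (g y) powr ?q)"
      using f' g unfolding in_Lp_def by auto
    note hh = h[OF hyp a1 norm_ge_zero norm_ge_zero a2]
    show "integrable \<mu> (\<lambda>y. norm (f (- x + y)) * norm (g y))" by (rule hh(1))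
    show "(\<integral>y. norm (f (- x + y)) * norm (g y) \<partial>\<mu>) \<le> Lp_norm \<mu> p f * Lp_norm \<mu> ?q g"
      using hh(2) nf unfolding Lp_norm_def by simp
  qed
  show i: "integrable \<mu> (\<lambda>y. g y * f (- x + y))"
    apply (rule Bochner_Integration.integrable_bound[OF h1])
     apply (rule borel_measurable_times[OF gm fm])
    by (auto simp: norm_mult)
  have "norm (conv \<mu> g (check f) x) \<le> (\<integral>y. norm (g y * f (- x + y)) \<partial>\<mu>)"
    unfolding conv_check by (rule integral_norm_bound)
  also have "\<dots> = (\<integral>y. norm (f (- x + y)) * norm (g y) \<partial>\<mu>)"
    by (rule Bochner_Integration.integral_cong[OF refl]) (simp add: norm_mult)
  finally show "norm (conv \<mu> g (check f) x) \<le> Lp_norm \<mu> p f * Lp_norm \<mu> (conj_exp p) g"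
    using h2 by (rule order_trans)
qed

end

context haar
begin

lemma Ap_rep_bounds:
  assumes p: "1 < p" and r: "Ap_rep \<mu> p v f g"
  shows "\<And>i x. norm (conv \<mu> (g i) (check (f i)) x) \<le> Lp_norm \<mu> p (f i) * Lp_norm \<mu> (conj_exp p) (g i)"
    "summable (\<lambda>i. Lp_norm \<mu> p (f i) * Lp_norm \<mu> (conj_exp p) (g i))"
    "\<And>x. summable (\<lambda>i. norm (conv \<mu> (g i) (check (f i)) x))"
    "\<And>x. summable (\<lambda>i. conv \<mu> (g i) (check (f i)) x)"
    "\<And>x. v x = (\<Sum>i. conv \<mu> (g i) (check (f i)) x)"
    "\<And>x. norm (v x) \<le> (\<Sum>i. Lp_norm \<mu> p (f i) * Lp_norm \<mu> (conj_exp p) (g i))"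
proof -
  have fi: "\<And>i. in_Lp \<mu> p (f i)" and gi: "\<And>i. in_Lp \<mu> (conj_exp p) (g i)"
    and s: "summable (\<lambda>i. Lp_norm \<mu> p (f i) * Lp_norm \<mu> (conj_exp p) (g i))"
    and e: "\<And>x. v x = (\<Sum>i. conv \<mu> (g i) (check (f i)) x)"
    using r unfolding Ap_rep_def by auto
  show b: "\<And>i x. norm (conv \<mu> (g i) (check (f i)) x) \<le> Lp_norm \<mu> p (f i) * Lp_norm \<mu> (conj_exp p) (g i)"
    using conv_bound(2)[OF p fi gi] .
  show "summable (\<lambda>i. Lp_norm \<mu> p (f i) * Lp_norm \<mu> (conj_exp p) (g i))" by (rule s)
  show sn: "\<And>x. summable (\<lambda>i. norm (conv \<mu> (g i) (check (f i)) x))"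
    by (rule summable_comparison_test'[OF s]) (use b in simp)
  show "\<And>x. summable (\<lambda>i. conv \<mu> (g i) (check (f i)) x)"
    by (rule summable_comparison_test'[OF s]) (use b in simp)
  show "\<And>x. v x = (\<Sum>i. conv \<mu> (g i) (check (f i)) x)" by (rule e)
  fix x
  have "norm (v x) \<le> (\<Sum>i. norm (conv \<mu> (g i) (check (f i)) x))"
    unfolding e by (rule summable_norm[OF sn])
  also have "\<dots> \<le> (\<Sum>i. Lp_norm \<mu> p (f i) * Lp_norm \<mu> (conj_exp p) (g i))"
    by (rule suminf_le[OF b sn s])
  finally show "norm (v x) \<le> (\<Sum>i. Lp_norm \<mu> p (f i) * Lp_norm \<mu> (conj_exp p) (g i))" .
qed

lemma point_bound:
  assumes p: "1 < p" and v: "v \<in> Ap \<mu> p"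
  shows "norm (v x) \<le> Ap_norm \<mu> p v"
proof -
  obtain f g where r: "Ap_rep \<mu> p v f g" using v unfolding Ap_def by auto
  show ?thesis
    unfolding Ap_norm_def
  proof (rule cInf_greatest)
    show "{\<Sum>i. Lp_norm \<mu> p (f i) * Lp_norm \<mu> (conj_exp p) (g i) | f g. Ap_rep \<mu> p v f g} \<noteq> {}"
      using r by blast
    fix y assume "y \<in> {\<Sum>i. Lp_norm \<mu> p (f i) * Lp_norm \<mu> (conj_exp p) (g i) | f g. Ap_rep \<mu> p v f g}"
    then obtain f' g' where r': "Ap_rep \<mu> p v f' g'"
      and y: "y = (\<Sum>i. Lp_norm \<mu> p (f' i) * Lp_norm \<mu> (conj_exp p) (g' i))" by blast
    show "norm (v x) \<le> y" unfolding y by (rule Ap_rep_bounds(6)[OF p r'])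
  qed
qed

lemma Ap_norm_le_rep:
  assumes p: "1 < p" and r: "Ap_rep \<mu> p v f g"
  shows "Ap_norm \<mu> p v \<le> (\<Sum>i. Lp_norm \<mu> p (f i) * Lp_norm \<mu> (conj_exp p) (g i))"
  unfolding Ap_norm_def
proof (rule cInf_lower)
  show "(\<Sum>i. Lp_norm \<mu> p (f i) * Lp_norm \<mu> (conj_exp p) (g i))
     \<in> {\<Sum>i. Lp_norm \<mu> p (f i) * Lp_norm \<mu> (conj_exp p) (g i) | f g. Ap_rep \<mu> p v f g}"
    using r by blast
  show "bdd_below {\<Sum>i. Lp_norm \<mu> p (f i) * Lp_norm \<mu> (conj_exp p) (g i) | f g. Ap_rep \<mu> p v f g}"
  proof (rule bdd_belowI[of _ 0])
    fix y assume "y \<in> {\<Sum>i. Lp_norm \<mu> p (f i) * Lp_norm \<mu> (conj_exp p) (g i) | f g. Ap_rep \<mu> p v f g}"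
    then obtain f' g' where r': "Ap_rep \<mu> p v f' g'"
      and y: "y = (\<Sum>i. Lp_norm \<mu> p (f' i) * Lp_norm \<mu> (conj_exp p) (g' i))" by blast
    show "0 \<le> y" unfolding y
      by (rule suminf_nonneg[OF Ap_rep_bounds(2)[OF p r']]) (simp add: Lp_norm_nonneg)
  qed
qed

end

lemma Hausdorff_t2: "Hausdorff_space (euclidean :: 'a::t2_space topology)"
  unfolding Hausdorff_space_def disjnt_def
  by (simp add: open_openin[symmetric]) (metis hausdorff)

lemma urysohn_cc:
  fixes K U :: "'a::t2_space set"
  assumes lc: "locally_compact_space (euclidean::'a topology)"
    and K: "compact K" and U: "open U" and KU: "K \<subseteq> U"
  obtains \<phi> :: "'a \<Rightarrow> real" and L where "continuous_on UNIV \<phi>" "\<And>x. 0 \<le> \<phi> x" "\<And>x. \<phi> x \<le> 1"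
    "\<And>x. x \<in> K \<Longrightarrow> \<phi> x = 1" "compact L" "L \<subseteq> U" "\<And>x. x \<notin> L \<Longrightarrow> \<phi> x = 0"
proof -
  have lcU: "locally_compact_space (subtopology euclidean U)"
    using locally_compact_space_open_subset[OF _ lc open_openin[THEN iffD1, OF U]] Hausdorff_t2 by blast
  have HU: "Hausdorff_space (subtopology euclidean U)"
    using Hausdorff_t2 Hausdorff_space_subtopology by blast
  have cK: "compactin (subtopology euclidean U) K"
    using K KU by (simp add: compactin_subtopology compactin_euclidean_iff)
  have ex: "\<forall>K. compactin (subtopology euclidean U) K \<longrightarrow> (\<exists>U' L. openin (subtopology euclidean U) U' \<and>
      compactin (subtopology euclidean U) L \<and> closedin (subtopology euclidean U) L \<and> K \<subseteq> U' \<and> U' \<subseteq> L)"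
    using locally_compact_space_compact_closed_compact[of "subtopology euclidean U"] HU lcU by simp
  obtain W L where W: "openin (subtopology euclidean U) W" and L: "compactin (subtopology euclidean U) L"
    and KW: "K \<subseteq> W" and WL: "W \<subseteq> L"
    using ex cK by meson
  have oW: "open W" using W U openin_open_trans by blast
  have cL: "compact L" "L \<subseteq> U" using L by (auto simp: compactin_subtopology compactin_euclidean_iff)
  have cr: "completely_regular_space (euclidean::'a topology)"
    using locally_compact_regular_imp_completely_regular_space[OF lc] Hausdorff_t2 by blast
  have cl: "closedin euclidean (- W)" using oW by (simp add: closed_closedin[symmetric] open_closed[symmetric])
  have cKe: "compactin euclidean K" using K by (simp add: compactin_euclidean_iff)
  have dj: "disjnt K (- W)" using KW by (auto simp: disjnt_def)
  obtain f where f: "continuous_map euclidean (top_of_set {0..1::real}) f" "f ` (- W) \<subseteq> {0}" "f ` K \<subseteq> {1}"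
    using Urysohn_completely_regular_compact_closed[of 0 1 euclidean K "- W", OF _ cr cKe cl dj] by auto
  have cf: "continuous_on UNIV f" and fr: "\<And>x. f x \<in> {0..1}"
    using f(1) by (auto simp: continuous_map_in_subtopology continuous_map_iff_continuous2)
  show thesis
  proof (rule that[OF cf _ _ _ cL])
    show "\<And>x. 0 \<le> f x" "\<And>x. f x \<le> 1" using fr by auto
    show "\<And>x. x \<in> K \<Longrightarrow> f x = 1" using f(3) by auto
    show "\<And>x. x \<notin> L \<Longrightarrow> f x = 0" using f(2) WL by auto
  qed
qed

lemma powr_add_le:
  fixes a b p :: real
  assumes "0 \<le> a" "0 \<le> b" "0 < p"
  shows "(a + b) powr p \<le> 2 powr p * (a powr p + b powr p)"
proof -
  have "(a + b) powr p \<le> (2 * max a b) powr p"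
    using assms by (intro powr_mono2) auto
  also have "\<dots> = 2 powr p * max a b powr p"
    using assms by (simp add: powr_mult)
  also have "\<dots> \<le> 2 powr p * (a powr p + b powr p)"
    using assms by (intro mult_left_mono) (auto simp: max_def)
  finally show ?thesis .
qed

lemma norm_powr_diff_le:
  fixes x y :: complex
  assumes "0 < p"
  shows "norm (x - y) powr p \<le> 2 powr p * (norm x powr p + norm y powr p)"
proof -
  have "norm (x - y) powr p \<le> (norm x + norm y) powr p"
    using assms by (intro powr_mono2) (auto simp: norm_triangle_ineq4)
  also have "\<dots> \<le> 2 powr p * (norm x powr p + norm y powr p)"
    using assms by (intro powr_add_le) auto
  finally show ?thesis .
qed

lemma norm_powr_add_le:
  fixes x y :: complex
  assumes "0 < p"
  shows "norm (x + y) powr p \<le> 2 powr p * (norm x powr p + norm y powr p)"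
  using norm_powr_diff_le[OF assms, of x "- y"] by simp

lemma in_Lp_meas_powr:
  "in_Lp M p f \<Longrightarrow> (\<lambda>x. norm (f x) powr p) \<in> borel_measurable M"
  unfolding in_Lp_def
  using borel_measurable_continuous_on[OF continuous_on_norm_id]
  by (intro powr_real_measurable) auto

lemma in_Lp_diff:
  assumes p: "0 < p" and f: "in_Lp M p f" and g: "in_Lp M p g"
  shows "in_Lp M p (\<lambda>x. f x - g x)"
proof -
  have fm: "f \<in> borel_measurable M" and gm: "g \<in> borel_measurable M" using f g by (auto simp: in_Lp_def)
  have dm: "(\<lambda>x. f x - g x) \<in> borel_measurable M" using fm gm by (rule borel_measurable_diff)
  have "integrable M (\<lambda>x. 2 powr p * (norm (f x) powr p + norm (g x) powr p))"
    using f g by (auto simp: in_Lp_def)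
  then have "integrable M (\<lambda>x. norm (f x - g x) powr p)"
    apply (rule Bochner_Integration.integrable_bound)
    using in_Lp_meas_powr[of M p "\<lambda>x. f x - g x"] dm apply (simp add: in_Lp_def)
  proof (intro AE_I2)
    fix x
    have h: "norm (f x - g x) powr p \<le> 2 powr p * (norm (f x) powr p + norm (g x) powr p)"
      by (rule norm_powr_diff_le[OF p])
    have "0 \<le> 2 powr p * (norm (f x) powr p + norm (g x) powr p)" by simp
    then show "norm (norm (f x - g x) powr p) \<le> norm (2 powr p * (norm (f x) powr p + norm (g x) powr p))"
      using h by simp
  qed
  then show ?thesis using dm by (simp add: in_Lp_def)
qed

lemma in_Lp_add:
  assumes p: "0 < p" and f: "in_Lp M p f" and g: "in_Lp M p g"
  shows "in_Lp M p (\<lambda>x. f x + g x)"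
proof -
  have fm: "f \<in> borel_measurable M" and gm: "g \<in> borel_measurable M" using f g by (auto simp: in_Lp_def)
  have dm: "(\<lambda>x. f x + g x) \<in> borel_measurable M" using fm gm by (rule borel_measurable_add)
  have "integrable M (\<lambda>x. 2 powr p * (norm (f x) powr p + norm (g x) powr p))"
    using f g by (auto simp: in_Lp_def)
  then have "integrable M (\<lambda>x. norm (f x + g x) powr p)"
    apply (rule Bochner_Integration.integrable_bound)
    using in_Lp_meas_powr[of M p "\<lambda>x. f x + g x"] dm apply (simp add: in_Lp_def)
  proof (intro AE_I2)
    fix x
    have h: "norm (f x + g x) powr p \<le> 2 powr p * (norm (f x) powr p + norm (g x) powr p)"
      by (rule norm_powr_add_le[OF p])
    have "0 \<le> 2 powr p * (norm (f x) powr p + norm (g x) powr p)" by simp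
    then show "norm (norm (f x + g x) powr p) \<le> norm (2 powr p * (norm (f x) powr p + norm (g x) powr p))"
      using h by simp
  qed
  then show ?thesis using dm by (simp add: in_Lp_def)
qed

lemma in_Lp_scale:
  assumes f: "in_Lp M p f"
  shows "in_Lp M p (\<lambda>x. c * f x)"
proof -
  have fm: "f \<in> borel_measurable M" using f by (auto simp: in_Lp_def)
  have dm: "(\<lambda>x. c * f x) \<in> borel_measurable M" using fm by (intro borel_measurable_times) auto
  have "integrable M (\<lambda>x. norm c powr p * norm (f x) powr p)"
    using f by (auto simp: in_Lp_def)
  moreover have "norm (c * f x) powr p = norm c powr p * norm (f x) powr p" for x
    by (simp add: norm_mult powr_mult)
  ultimately show ?thesis using dm by (simp add: in_Lp_def)
qed


definition Cc :: "('a::topological_space \<Rightarrow> complex) \<Rightarrow> bool" where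
  "Cc \<phi> \<longleftrightarrow> continuous_on UNIV \<phi> \<and> (\<exists>L. compact L \<and> (\<forall>z. z \<notin> L \<longrightarrow> \<phi> z = 0))"

lemma Cc_zero: "Cc (\<lambda>x. 0)"
  unfolding Cc_def by (auto intro!: exI[of _ "{}"])

lemma Cc_add: "Cc \<phi> \<Longrightarrow> Cc \<psi> \<Longrightarrow> Cc (\<lambda>x. \<phi> x + \<psi> x)"
  unfolding Cc_def
proof (elim conjE exE, intro conjI)
  fix L1 L2 assume "continuous_on UNIV \<phi>" "continuous_on UNIV \<psi>"
  then show "continuous_on UNIV (\<lambda>x. \<phi> x + \<psi> x)" by (intro continuous_intros)
  assume "compact L1" "\<forall>z. z \<notin> L1 \<longrightarrow> \<phi> z = 0" "compact L2" "\<forall>z. z \<notin> L2 \<longrightarrow> \<psi> z = 0"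
  then show "\<exists>L. compact L \<and> (\<forall>z. z \<notin> L \<longrightarrow> \<phi> z + \<psi> z = 0)"
    by (intro exI[of _ "L1 \<union> L2"]) auto
qed

lemma Cc_scale: "Cc \<phi> \<Longrightarrow> Cc (\<lambda>x. c * \<phi> x)"
  unfolding Cc_def
proof (elim conjE exE, intro conjI)
  fix L assume "continuous_on UNIV \<phi>"
  then show "continuous_on UNIV (\<lambda>x. c * \<phi> x)" by (intro continuous_intros)
  assume "compact L" "\<forall>z. z \<notin> L \<longrightarrow> \<phi> z = 0"
  then show "\<exists>L. compact L \<and> (\<forall>z. z \<notin> L \<longrightarrow> c * \<phi> z = 0)"
    by (intro exI[of _ L]) auto
qed

locale lc_haar = haar \<mu> for \<mu> :: "'a::{topological_group_add, t2_space} measure" +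
  assumes lc: "locally_compact_space (euclidean::'a topology)"
begin

lemma indicator_integrable_compact:
  assumes "compact L" shows "integrable \<mu> (indicator L :: 'a \<Rightarrow> real)"
  using compact_fin[OF assms] assms sets_mu
  by (simp add: integrable_indicator_iff borel_compact)

lemma Cc_Lp:
  assumes c: "Cc \<phi>" and p: "0 < p"
  shows "in_Lp \<mu> p \<phi>"
proof -
  obtain L where cont: "continuous_on UNIV \<phi>" and L: "compact L" and z: "\<And>z. z \<notin> L \<Longrightarrow> \<phi> z = 0"
    using c unfolding Cc_def by blast
  have "compact (\<phi> ` L)" by (rule compact_continuous_image[OF continuous_on_subset[OF cont] L]) simp
  then obtain M where M: "\<And>z. z \<in> L \<Longrightarrow> norm (\<phi> z) \<le> M"
    using compact_imp_bounded bounded_iff by (metis image_eqI)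
  define M' where "M' = max M 0"
  have M': "\<And>z. norm (\<phi> z) \<le> M'" "M' \<ge> 0"
  proof -
    fix z show "norm (\<phi> z) \<le> M'"
    proof (cases "z \<in> L")
      case True then show ?thesis using M[OF True] unfolding M'_def by linarith
    next
      case False then show ?thesis using z[OF False] unfolding M'_def by simp
    qed
  qed (simp add: M'_def)
  have fm: "\<phi> \<in> borel_measurable \<mu>" by (rule cont_meas[OF cont])
  have bi: "integrable \<mu> (\<lambda>z. M' powr p * indicator L z)"
    using indicator_integrable_compact[OF L] by simp
  have "integrable \<mu> (\<lambda>z. norm (\<phi> z) powr p)"
  proof (rule Bochner_Integration.integrable_bound[OF bi])
    show "(\<lambda>z. norm (\<phi> z) powr p) \<in> borel_measurable \<mu>"
      using borel_measurable_continuous_on[OF continuous_on_norm_id fm] by (intro powr_real_measurable) auto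
    show "AE z in \<mu>. norm (norm (\<phi> z) powr p) \<le> norm (M' powr p * indicator L z)"
    proof (intro AE_I2)
      fix z
      show "norm (norm (\<phi> z) powr p) \<le> norm (M' powr p * indicator L z)"
      proof (cases "z \<in> L")
        case True
        have "norm (\<phi> z) powr p \<le> M' powr p" using M' p by (intro powr_mono2) auto
        then show ?thesis using True by simp
      next
        case False
        then show ?thesis using z by simp
      qed
    qed
  qed
  then show ?thesis using fm by (simp add: in_Lp_def)
qed

definition approx :: "real \<Rightarrow> ('a \<Rightarrow> complex) \<Rightarrow> bool" where
  "approx p f \<longleftrightarrow> in_Lp \<mu> p f \<and> (\<forall>\<epsilon>>0. \<exists>\<phi>. Cc \<phi> \<and> (\<integral>x. norm (f x - \<phi> x) powr p \<partial>\<mu>) < \<epsilon>)"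

lemma approx_zero: "0 < p \<Longrightarrow> approx p (\<lambda>x. 0)"
  unfolding approx_def using Cc_Lp[OF Cc_zero] Cc_zero by auto

lemma approx_add:
  assumes p: "0 < p" and f: "approx p f" and g: "approx p g"
  shows "approx p (\<lambda>x. f x + g x)"
  unfolding approx_def
proof (intro conjI allI impI)
  have fL: "in_Lp \<mu> p f" and gL: "in_Lp \<mu> p g" using f g by (auto simp: approx_def)
  show "in_Lp \<mu> p (\<lambda>x. f x + g x)" by (rule in_Lp_add[OF p fL gL])
  fix \<epsilon> :: real assume e: "\<epsilon> > 0"
  define \<delta> where "\<delta> = \<epsilon> / (2 * 2 powr p)"
  have d: "\<delta> > 0" using e by (simp add: \<delta>_def)
  obtain \<phi> where \<phi>: "Cc \<phi>" "(\<integral>x. norm (f x - \<phi> x) powr p \<partial>\<mu>) < \<delta>" using f d by (auto simp: approx_def)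
  obtain \<psi> where \<psi>: "Cc \<psi>" "(\<integral>x. norm (g x - \<psi> x) powr p \<partial>\<mu>) < \<delta>" using g d by (auto simp: approx_def)
  have i1: "integrable \<mu> (\<lambda>x. norm (f x - \<phi> x) powr p)"
    using in_Lp_diff[OF p fL Cc_Lp[OF \<phi>(1) p]] by (simp add: in_Lp_def)
  have i2: "integrable \<mu> (\<lambda>x. norm (g x - \<psi> x) powr p)"
    using in_Lp_diff[OF p gL Cc_Lp[OF \<psi>(1) p]] by (simp add: in_Lp_def)
  have i3: "integrable \<mu> (\<lambda>x. norm (f x + g x - (\<phi> x + \<psi> x)) powr p)"
    using in_Lp_diff[OF p in_Lp_add[OF p fL gL] Cc_Lp[OF Cc_add[OF \<phi>(1) \<psi>(1)] p]] by (simp add: in_Lp_def)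
  have "(\<integral>x. norm (f x + g x - (\<phi> x + \<psi> x)) powr p \<partial>\<mu>)
      \<le> (\<integral>x. 2 powr p * (norm (f x - \<phi> x) powr p + norm (g x - \<psi> x) powr p) \<partial>\<mu>)"
  proof (rule integral_mono[OF i3])
    show "integrable \<mu> (\<lambda>x. 2 powr p * (norm (f x - \<phi> x) powr p + norm (g x - \<psi> x) powr p))"
      using i1 i2 by simp
    fix x
    have e: "f x + g x - (\<phi> x + \<psi> x) = (f x - \<phi> x) + (g x - \<psi> x)" by simp
    show "norm (f x + g x - (\<phi> x + \<psi> x)) powr p \<le> 2 powr p * (norm (f x - \<phi> x) powr p + norm (g x - \<psi> x) powr p)"
      unfolding e by (rule norm_powr_add_le[OF p])
  qed
  also have "\<dots> = 2 powr p * ((\<integral>x. norm (f x - \<phi> x) powr p \<partial>\<mu>) + (\<integral>x. norm (g x - \<psi> x) powr p \<partial>\<mu>))"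
    using i1 i2 by simp
  also have "\<dots> < 2 powr p * (\<delta> + \<delta>)"
    using \<phi>(2) \<psi>(2) by (intro mult_strict_left_mono) auto
  also have "\<dots> = \<epsilon>" by (simp add: \<delta>_def)
  finally show "\<exists>h. Cc h \<and> (\<integral>x. norm (f x + g x - h x) powr p \<partial>\<mu>) < \<epsilon>"
    using Cc_add[OF \<phi>(1) \<psi>(1)] by blast
qed

lemma approx_scale:
  assumes p: "0 < p" and f: "approx p f"
  shows "approx p (\<lambda>x. c * f x)"
  unfolding approx_def
proof (intro conjI allI impI)
  have fL: "in_Lp \<mu> p f" using f by (auto simp: approx_def)
  show "in_Lp \<mu> p (\<lambda>x. c * f x)" by (rule in_Lp_scale[OF fL])
  fix \<epsilon> :: real assume e: "\<epsilon> > 0"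
  show "\<exists>h. Cc h \<and> (\<integral>x. norm (c * f x - h x) powr p \<partial>\<mu>) < \<epsilon>"
  proof (cases "c = 0")
    case True
    then show ?thesis using Cc_zero e by (intro exI[of _ "\<lambda>x. 0"]) simp
  next
    case False
    define \<delta> where "\<delta> = \<epsilon> / norm c powr p"
    have d: "\<delta> > 0" using e False by (simp add: \<delta>_def)
    obtain \<phi> where \<phi>: "Cc \<phi>" "(\<integral>x. norm (f x - \<phi> x) powr p \<partial>\<mu>) < \<delta>" using f d by (auto simp: approx_def)
    have "(\<integral>x. norm (c * f x - c * \<phi> x) powr p \<partial>\<mu>) = (\<integral>x. norm c powr p * norm (f x - \<phi> x) powr p \<partial>\<mu>)"
      by (rule Bochner_Integration.integral_cong[OF refl])
         (simp add: norm_mult powr_mult flip: right_diff_distrib)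
    also have "\<dots> = norm c powr p * (\<integral>x. norm (f x - \<phi> x) powr p \<partial>\<mu>)" by simp
    also have "\<dots> < norm c powr p * \<delta>" using \<phi>(2) False by (intro mult_strict_left_mono) auto
    also have "\<dots> = \<epsilon>" using False by (simp add: \<delta>_def)
    finally show ?thesis using Cc_scale[OF \<phi>(1)] by blast
  qed
qed

end

context lc_haar
begin

lemma outer':
  assumes B: "B \<in> sets borel" and fin: "emeasure \<mu> B < \<infinity>" and e: "0 < e"
  obtains U where "open U" "B \<subseteq> U" "emeasure \<mu> U < \<infinity>" "measure \<mu> U < measure \<mu> B + e"
proof -
  have eB: "emeasure \<mu> B = ennreal (measure \<mu> B)"
    using fin by (intro emeasure_eq_ennreal_measure) simp
  have "(INF U \<in> {U. open U \<and> B \<subseteq> U}. emeasure \<mu> U) < ennreal (measure \<mu> B + e)"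
    unfolding outer_reg[OF B, symmetric] eB using e by (simp add: ennreal_lessI)
  then obtain U where U: "open U" "B \<subseteq> U" "emeasure \<mu> U < ennreal (measure \<mu> B + e)"
    by (auto simp: INF_less_iff)
  have fU: "emeasure \<mu> U < \<infinity>" using order.strict_trans[OF U(3) ennreal_less_top] by simp
  have eU: "emeasure \<mu> U = ennreal (measure \<mu> U)"
    using fU by (intro emeasure_eq_ennreal_measure) simp
  have "measure \<mu> U < measure \<mu> B + e"
    using U(3) unfolding eU by (simp add: ennreal_less_iff)
  then show thesis using that U fU by blast
qed

lemma inner':
  assumes U: "open U" and fin: "emeasure \<mu> U < \<infinity>" and e: "0 < e"
  obtains K where "compact K" "K \<subseteq> U" "measure \<mu> U < measure \<mu> K + e"
proof (cases "measure \<mu> U < e")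
  case True
  then show thesis using that[of "{}"] by simp
next
  case False
  have eU: "emeasure \<mu> U = ennreal (measure \<mu> U)"
    using fin by (intro emeasure_eq_ennreal_measure) simp
  have "ennreal (measure \<mu> U - e) < (SUP K \<in> {K. compact K \<and> K \<subseteq> U}. emeasure \<mu> K)"
    unfolding inner_reg[OF U, symmetric] eU using e False by (intro ennreal_lessI) auto
  then obtain K where K: "compact K" "K \<subseteq> U" "ennreal (measure \<mu> U - e) < emeasure \<mu> K"
    by (auto simp: less_SUP_iff)
  have fK: "emeasure \<mu> K < \<infinity>" using compact_fin[OF K(1)] .
  have eK: "emeasure \<mu> K = ennreal (measure \<mu> K)"
    using fK by (intro emeasure_eq_ennreal_measure) simp
  have "measure \<mu> U - e < measure \<mu> K"
    using K(3) False unfolding eK by (simp add: ennreal_less_iff)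
  then show thesis using that K by auto
qed

lemma powr_le_self:
  fixes d p :: real
  assumes "0 \<le> d" "d \<le> 1" "1 \<le> p"
  shows "d powr p \<le> d"
proof (cases "d = 0")
  case True then show ?thesis by simp
next
  case False
  have "d powr p \<le> d powr 1" using assms by (intro powr_mono') auto
  then show ?thesis using False assms by simp
qed

lemma approx_ind:
  assumes p: "1 \<le> p" and B: "B \<in> sets borel" and fin: "emeasure \<mu> B < \<infinity>"
  shows "approx p (\<lambda>x. complex_of_real (indicator B x))"
  unfolding approx_def
proof (intro conjI allI impI)
  have p0: "0 < p" using p by simp
  have Bm: "B \<in> sets \<mu>" using B sets_mu by simp
  have bm: "(\<lambda>x. complex_of_real (indicator B x)) \<in> borel_measurable \<mu>"
    by (rule borel_measurable_continuous_on[OF continuous_on_of_real_id borel_measurable_indicator[OF Bm]])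
  have ie: "norm (complex_of_real (indicator B x)) powr p = indicator B x" for x
    by (simp add: indicator_def)
  have iB: "integrable \<mu> (indicator B :: 'a \<Rightarrow> real)"
    using Bm fin by (simp add: integrable_indicator_iff)
  show L: "in_Lp \<mu> p (\<lambda>x. complex_of_real (indicator B x))"
    unfolding in_Lp_def ie using bm iB by simp
  fix \<epsilon> :: real assume e: "0 < \<epsilon>"
  define e' where "e' = \<epsilon> / 3"
  have e': "0 < e'" using e by (simp add: e'_def)
  obtain U where U: "open U" "B \<subseteq> U" "emeasure \<mu> U < \<infinity>" "measure \<mu> U < measure \<mu> B + e'"
    using outer'[OF B fin e'] by blast
  obtain K where K: "compact K" "K \<subseteq> U" "measure \<mu> U < measure \<mu> K + e'"
    using inner'[OF U(1) U(3) e'] by blast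
  obtain \<phi> :: "'a \<Rightarrow> real" and L where \<phi>: "continuous_on UNIV \<phi>" "\<And>x. 0 \<le> \<phi> x" "\<And>x. \<phi> x \<le> 1"
    "\<And>x. x \<in> K \<Longrightarrow> \<phi> x = 1" "compact L" "L \<subseteq> U" "\<And>x. x \<notin> L \<Longrightarrow> \<phi> x = 0"
    using urysohn_cc[OF lc K(1) U(1) K(2)] by blast
  define h where "h = (\<lambda>x. complex_of_real (\<phi> x))"
  have ch: "Cc h" unfolding Cc_def h_def continuous_on_of_real_o_iff
    using \<phi>(1,5,7) by (intro conjI exI[of _ L]) auto
  define D where "D = U - (K \<inter> B)"
  have Um: "U \<in> sets \<mu>" "K \<in> sets \<mu>" using U(1) K(1) sets_mu by (auto simp: borel_compact)
  have Dm: "D \<in> sets \<mu>" unfolding D_def using Um Bm by auto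
  have "emeasure \<mu> D \<le> emeasure \<mu> U" by (rule emeasure_mono) (use Um in \<open>auto simp: D_def\<close>)
  then have fD: "emeasure \<mu> D < \<infinity>" using U(3) by (rule le_less_trans)
  have iD: "integrable \<mu> (indicator D :: 'a \<Rightarrow> real)"
    using Dm fD by (simp add: integrable_indicator_iff)
  have pw: "norm (complex_of_real (indicator B x) - h x) powr p \<le> indicator D x" for x
  proof -
    define d where "d = norm (complex_of_real (indicator B x) - h x)"
    have d_eq: "d = \<bar>indicator B x - \<phi> x\<bar>" unfolding d_def h_def
      by (simp only: of_real_diff[symmetric] norm_of_real)
    have d01: "0 \<le> d" "d \<le> 1" using \<phi>(2,3)[of x] unfolding d_eq by (auto simp: indicator_def)
    have "d \<le> indicator D x"
    proof (cases "x \<in> D")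
      case True then show ?thesis using d01 by simp
    next
      case False
      then have "x \<notin> U \<or> (x \<in> K \<and> x \<in> B)" unfolding D_def by auto
      then have "d = 0"
      proof
        assume "x \<notin> U"
        then have "x \<notin> B" "x \<notin> L" using U(2) \<phi>(6) by auto
        then show "d = 0" unfolding d_eq using \<phi>(7) by simp
      next
        assume "x \<in> K \<and> x \<in> B"
        then show "d = 0" unfolding d_eq using \<phi>(4) by simp
      qed
      then show ?thesis by simp
    qed
    moreover have "d powr p \<le> d" using powr_le_self[OF d01 p] .
    ultimately show ?thesis unfolding d_def by linarith
  qed
  have iL: "integrable \<mu> (\<lambda>x. norm (complex_of_real (indicator B x) - h x) powr p)"
    using in_Lp_diff[OF p0 L Cc_Lp[OF ch p0]] by (simp add: in_Lp_def)
  have "(\<integral>x. norm (complex_of_real (indicator B x) - h x) powr p \<partial>\<mu>) \<le> (\<integral>x. indicator D x \<partial>\<mu>)"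
    by (rule integral_mono[OF iL iD pw])
  also have "\<dots> = measure \<mu> D" by simp
  also have "\<dots> \<le> measure \<mu> (U - K) + measure \<mu> (U - B)"
  proof -
    have "D = (U - K) \<union> (U - B)" unfolding D_def by auto
    moreover have "emeasure \<mu> (U - K) \<le> emeasure \<mu> U" "emeasure \<mu> (U - B) \<le> emeasure \<mu> U"
      using Um Bm by (auto intro!: emeasure_mono)
    then have "emeasure \<mu> (U - K) < \<infinity>" "emeasure \<mu> (U - B) < \<infinity>"
      using le_less_trans[OF _ U(3)] by blast+
    then have "emeasure \<mu> (U - K) \<noteq> \<infinity>" "emeasure \<mu> (U - B) \<noteq> \<infinity>" by simp_all
    ultimately show ?thesis using Um Bm by (simp add: measure_subadditive)
  qed
  also have "\<dots> = (measure \<mu> U - measure \<mu> K) + (measure \<mu> U - measure \<mu> B)"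
  proof -
    have "emeasure \<mu> U \<noteq> \<infinity>" using U(3) by simp
    then show ?thesis using measure_Diff[of \<mu> U K] measure_Diff[of \<mu> U B] U(2) K(2) Um Bm by simp
  qed
  also have "\<dots> < \<epsilon>" using U(4) K(3) e unfolding e'_def by linarith
  finally show "\<exists>h. Cc h \<and> (\<integral>x. norm (complex_of_real (indicator B x) - h x) powr p \<partial>\<mu>) < \<epsilon>"
    using ch by blast
qed

end

context lc_haar
begin

lemma approx_simple:
  assumes p: "1 \<le> p" and fin: "finite (range F)" and Fm: "F \<in> borel_measurable \<mu>" and L: "in_Lp \<mu> p F"
  shows "approx p F"
proof -
  have p0: "0 < p" using p by simp
  define A where "A c = {y. F y = c}" for c
  have Am: "A c \<in> sets borel" for c
  proof -
    have "F -` {c} \<inter> space \<mu> \<in> sets \<mu>" by (rule borel_measurable_vimage[OF Fm])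
    then show ?thesis using sets_mu unfolding A_def by (simp add: vimage_def)
  qed
  have Fi: "integrable \<mu> (\<lambda>x. norm (F x) powr p)" using L by (simp add: in_Lp_def)
  have trm: "approx p (\<lambda>x. c * complex_of_real (indicator (A c) x))" for c
  proof (cases "c = 0")
    case True
    then show ?thesis using approx_zero[OF p0] by simp
  next
    case False
    have cp: "norm c powr p > 0" using False by simp
    have bi: "integrable \<mu> (\<lambda>x. norm (F x) powr p / norm c powr p)" using Fi by simp
    have "integrable \<mu> (indicator (A c) :: 'a \<Rightarrow> real)"
    proof (rule Bochner_Integration.integrable_bound[OF bi])
      show "(indicator (A c) :: 'a \<Rightarrow> real) \<in> borel_measurable \<mu>"
        using Am sets_mu by (intro borel_measurable_indicator) simp
      show "AE x in \<mu>. norm (indicator (A c) x :: real) \<le> norm (norm (F x) powr p / norm c powr p)"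
      proof (intro AE_I2)
        fix x show "norm (indicator (A c) x :: real) \<le> norm (norm (F x) powr p / norm c powr p)"
          using cp by (cases "x \<in> A c") (auto simp: A_def)
      qed
    qed
    then have "emeasure \<mu> (A c) < \<infinity>" by (simp add: integrable_indicator_iff)
    then show ?thesis using approx_scale[OF p0 approx_ind[OF p Am]] by blast
  qed
  have sum: "approx p (\<lambda>x. \<Sum>c\<in>S. c * complex_of_real (indicator (A c) x))" if "finite S" for S
    using that
  proof (induction S rule: finite_induct)
    case empty
    then show ?case using approx_zero[OF p0] by simp
  next
    case (insert c S)
    then show ?case using approx_add[OF p0 trm[of c] insert.IH] by simp
  qed
  have eq: "F = (\<lambda>x. \<Sum>c\<in>range F. c * complex_of_real (indicator (A c) x))"
  proof
    fix x
    have "(\<Sum>c\<in>range F. c * complex_of_real (indicator (A c) x)) = (\<Sum>c\<in>range F. if c = F x then F x else 0)"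
      by (rule sum.cong) (auto simp: A_def)
    also have "\<dots> = F x" using fin by (simp add: sum.delta)
    finally show "F x = (\<Sum>c\<in>range F. c * complex_of_real (indicator (A c) x))" by simp
  qed
  show ?thesis by (subst eq) (rule sum[OF fin])
qed

lemma approx_all:
  assumes p: "1 \<le> p" and L: "in_Lp \<mu> p f"
  shows "approx p f"
  unfolding approx_def
proof (intro conjI allI impI L)
  have p0: "0 < p" using p by simp
  have fm: "f \<in> borel_measurable \<mu>" and fi: "integrable \<mu> (\<lambda>x. norm (f x) powr p)"
    using L by (auto simp: in_Lp_def)
  obtain S where S: "\<And>i. simple_function \<mu> (S i)" "\<And>x. (\<lambda>i. S i x) \<longlonglongrightarrow> f x"
    "\<And>i x. dist (S i x) 0 \<le> 2 * dist (f x) 0"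
    using borel_measurable_implies_sequence_metric[OF fm, of 0] by auto
  have Sb: "norm (S i x) \<le> 2 * norm (f x)" for i x using S(3)[of i x] by simp
  have Sm: "S i \<in> borel_measurable \<mu>" for i by (rule borel_measurable_simple_function[OF S(1)])
  have Sfin: "finite (range (S i))" for i using simple_functionD(1)[OF S(1)[of i]] by simp
  have SL: "in_Lp \<mu> p (S i)" for i
  proof -
    have bi: "integrable \<mu> (\<lambda>x. 2 powr p * norm (f x) powr p)" using fi by simp
    have "integrable \<mu> (\<lambda>x. norm (S i x) powr p)"
    proof (rule Bochner_Integration.integrable_bound[OF bi])
      show "(\<lambda>x. norm (S i x) powr p) \<in> borel_measurable \<mu>"
        using borel_measurable_continuous_on[OF continuous_on_norm_id Sm] by (intro powr_real_measurable) auto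
      show "AE x in \<mu>. norm (norm (S i x) powr p) \<le> norm (2 powr p * norm (f x) powr p)"
      proof (intro AE_I2)
        fix x
        have "norm (S i x) powr p \<le> (2 * norm (f x)) powr p" using Sb p0 by (intro powr_mono2) auto
        also have "\<dots> = 2 powr p * norm (f x) powr p" by (simp add: powr_mult)
        finally show "norm (norm (S i x) powr p) \<le> norm (2 powr p * norm (f x) powr p)" by simp
      qed
    qed
    then show ?thesis using Sm by (simp add: in_Lp_def)
  qed
  have lim: "(\<lambda>i. \<integral>x. norm (f x - S i x) powr p \<partial>\<mu>) \<longlonglongrightarrow> (\<integral>x. 0 \<partial>\<mu>)"
  proof (rule integral_dominated_convergence[where w="\<lambda>x. 3 powr p * norm (f x) powr p"])
    show "(\<lambda>x. 0::real) \<in> borel_measurable \<mu>" by simp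
    show "(\<lambda>x. norm (f x - S i x) powr p) \<in> borel_measurable \<mu>" for i
      using in_Lp_meas_powr[OF in_Lp_diff[OF p0 L SL]] .
    show "integrable \<mu> (\<lambda>x. 3 powr p * norm (f x) powr p)" using fi by simp
    show "AE x in \<mu>. (\<lambda>i. norm (f x - S i x) powr p) \<longlonglongrightarrow> 0"
    proof (intro AE_I2)
      fix x
      have "(\<lambda>i. f x - S i x) \<longlonglongrightarrow> 0"
        using tendsto_diff[OF tendsto_const[of "f x"] S(2)[of x]] by simp
      then have "(\<lambda>i. norm (f x - S i x)) \<longlonglongrightarrow> 0" by (rule tendsto_norm_zero)
      then show "(\<lambda>i. norm (f x - S i x) powr p) \<longlonglongrightarrow> 0"
        by (rule tendsto_zero_powrI[OF _ tendsto_const]) (use p0 in auto)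
    qed
    show "AE x in \<mu>. norm (norm (f x - S i x) powr p) \<le> 3 powr p * norm (f x) powr p" for i
    proof (intro AE_I2)
      fix x
      have "norm (f x - S i x) \<le> norm (f x) + norm (S i x)" by (rule norm_triangle_ineq4)
      also have "\<dots> \<le> 3 * norm (f x)" using Sb[of i x] by simp
      finally have "norm (f x - S i x) powr p \<le> (3 * norm (f x)) powr p" using p0 by (intro powr_mono2) auto
      also have "\<dots> = 3 powr p * norm (f x) powr p" by (simp add: powr_mult)
      finally show "norm (norm (f x - S i x) powr p) \<le> 3 powr p * norm (f x) powr p" by simp
    qed
  qed
  fix \<epsilon> :: real assume e: "0 < \<epsilon>"
  define \<delta> where "\<delta> = \<epsilon> / (2 * 2 powr p)"
  have d: "0 < \<delta>" using e by (simp add: \<delta>_def)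
  have "eventually (\<lambda>i. (\<integral>x. norm (f x - S i x) powr p \<partial>\<mu>) < \<delta>) sequentially"
    using order_tendstoD(2)[OF lim] d by simp
  then obtain i where i: "(\<integral>x. norm (f x - S i x) powr p \<partial>\<mu>) < \<delta>"
    by (auto simp: eventually_sequentially)
  obtain h where h: "Cc h" "(\<integral>x. norm (S i x - h x) powr p \<partial>\<mu>) < \<delta>"
    using approx_simple[OF p Sfin Sm SL] d unfolding approx_def by blast
  have i1: "integrable \<mu> (\<lambda>x. norm (f x - S i x) powr p)"
    using in_Lp_diff[OF p0 L SL] by (simp add: in_Lp_def)
  have i2: "integrable \<mu> (\<lambda>x. norm (S i x - h x) powr p)"
    using in_Lp_diff[OF p0 SL Cc_Lp[OF h(1) p0]] by (simp add: in_Lp_def)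
  have i3: "integrable \<mu> (\<lambda>x. norm (f x - h x) powr p)"
    using in_Lp_diff[OF p0 L Cc_Lp[OF h(1) p0]] by (simp add: in_Lp_def)
  have "(\<integral>x. norm (f x - h x) powr p \<partial>\<mu>)
      \<le> (\<integral>x. 2 powr p * (norm (f x - S i x) powr p + norm (S i x - h x) powr p) \<partial>\<mu>)"
  proof (rule integral_mono[OF i3])
    show "integrable \<mu> (\<lambda>x. 2 powr p * (norm (f x - S i x) powr p + norm (S i x - h x) powr p))"
      using i1 i2 by simp
    fix x
    have e: "f x - h x = (f x - S i x) + (S i x - h x)" by simp
    show "norm (f x - h x) powr p \<le> 2 powr p * (norm (f x - S i x) powr p + norm (S i x - h x) powr p)"
      unfolding e by (rule norm_powr_add_le[OF p0])
  qed
  also have "\<dots> = 2 powr p * ((\<integral>x. norm (f x - S i x) powr p \<partial>\<mu>) + (\<integral>x. norm (S i x - h x) powr p \<partial>\<mu>))"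
    using i1 i2 by simp
  also have "\<dots> < 2 powr p * (\<delta> + \<delta>)"
    using i h(2) by (intro mult_strict_left_mono) auto
  also have "\<dots> = \<epsilon>" by (simp add: \<delta>_def)
  finally show "\<exists>h. Cc h \<and> (\<integral>x. norm (f x - h x) powr p \<partial>\<mu>) < \<epsilon>"
    using h(1) by blast
qed

end

context lc_haar
begin

lemma cont_transl:
  fixes \<phi> :: "'a \<Rightarrow> 'c::topological_space"
  assumes "continuous_on UNIV \<phi>" shows "continuous_on UNIV (\<lambda>y. \<phi> (t + y))"
proof -
  have "continuous_on UNIV (\<lambda>y::'a. t + y)" by (intro continuous_intros)
  then show ?thesis using continuous_on_compose2[OF assms] by blast
qed

lemma TC_Cc:
  assumes c: "Cc \<phi>" and p: "0 < p" and e: "0 < e"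
  obtains S where "open S" "0 \<in> S" "\<And>t. t \<in> S \<Longrightarrow> (\<integral>y. norm (\<phi> (t + y) - \<phi> y) powr p \<partial>\<mu>) < e"
proof -
  obtain L where cont: "continuous_on UNIV \<phi>" and L: "compact L" and z: "\<And>z. z \<notin> L \<Longrightarrow> \<phi> z = 0"
    using c unfolding Cc_def by blast
  obtain N0 N :: "'a set" where N0: "open N0" and N: "compact N" and "0 \<in> N0" "N0 \<subseteq> N"
  proof -
    have "\<exists>U K. openin euclidean U \<and> compactin euclidean K \<and> (0::'a) \<in> U \<and> U \<subseteq> K"
      using lc unfolding locally_compact_space_def by simp
    then show thesis using that by (auto simp: open_openin[symmetric] compactin_euclidean_iff)
  qed
  define C where "C = (\<lambda>z. - fst z + snd z) ` (N \<times> L) \<union> L"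
  have cC: "compact C" unfolding C_def
    by (intro compact_Un L compact_continuous_image compact_Times N) (auto intro!: continuous_intros)
  have supp: "\<phi> (t + y) = 0 \<and> \<phi> y = 0" if "t \<in> N" "y \<notin> C" for t y
  proof -
    have "y \<notin> L" using that unfolding C_def by auto
    moreover have "t + y \<notin> L"
    proof
      assume "t + y \<in> L"
      then have "- fst (t, t + y) + snd (t, t + y) \<in> C" using that(1) unfolding C_def by blast
      then show False using that(2) by simp
    qed
    ultimately show ?thesis using z by auto
  qed
  define mC where "mC = measure \<mu> C"
  have mC0: "mC \<ge> 0" by (simp add: mC_def)
  define \<epsilon> where "\<epsilon> = (e / (2 * (mC + 1))) powr (1/p)"
  have ep: "\<epsilon> > 0" using e mC0 by (simp add: \<epsilon>_def)
  have epp: "\<epsilon> powr p = e / (2 * (mC + 1))"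
    using e mC0 p by (simp add: \<epsilon>_def powr_powr)
  define W where "W = {z::'a \<times> 'a. norm (\<phi> (fst z + snd z) - \<phi> (snd z)) < \<epsilon>}"
  have cW: "continuous_on UNIV (\<lambda>z::'a \<times> 'a. norm (\<phi> (fst z + snd z) - \<phi> (snd z)))"
  proof -
    have "continuous_on UNIV (\<lambda>z::'a \<times> 'a. \<phi> (fst z + snd z))"
      by (rule continuous_on_compose2[OF cont]) (auto intro!: continuous_intros)
    moreover have "continuous_on UNIV (\<lambda>z::'a \<times> 'a. \<phi> (snd z))"
      by (rule continuous_on_compose2[OF cont]) (auto intro!: continuous_intros)
    ultimately show ?thesis by (intro continuous_intros)
  qed
  have oW: "open W" unfolding W_def by (rule open_Collect_less[OF cW continuous_on_const])
  have "{0} \<times> C \<subseteq> W" unfolding W_def using ep by auto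
  then obtain X0 where X0: "0 \<in> X0" "open X0" "X0 \<times> C \<subseteq> W"
    using Elementary_Topology.tube_lemma[OF cC oW] by blast
  have iC: "integrable \<mu> (indicator C :: 'a \<Rightarrow> real)" by (rule indicator_integrable_compact[OF cC])
  show thesis
  proof (rule that[of "X0 \<inter> N0"])
    show "open (X0 \<inter> N0)" using X0 N0 by auto
    show "0 \<in> X0 \<inter> N0" using X0 \<open>0 \<in> N0\<close> by auto
    fix t assume t: "t \<in> X0 \<inter> N0"
    have bi: "integrable \<mu> (\<lambda>y. \<epsilon> powr p * indicator C y)" using iC by simp
    have pw: "norm (\<phi> (t + y) - \<phi> y) powr p \<le> \<epsilon> powr p * indicator C y" for y
    proof (cases "y \<in> C")
      case True
      then have "(t, y) \<in> W" using X0(3) t by auto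
      then have "norm (\<phi> (t + y) - \<phi> y) < \<epsilon>" unfolding W_def by simp
      then have "norm (\<phi> (t + y) - \<phi> y) powr p \<le> \<epsilon> powr p" using p by (intro powr_mono2) auto
      then show ?thesis using True by simp
    next
      case False
      then show ?thesis using supp[of t y] t \<open>N0 \<subseteq> N\<close> by auto
    qed
    have mi: "(\<lambda>y. norm (\<phi> (t + y) - \<phi> y) powr p) \<in> borel_measurable \<mu>"
    proof -
      have "continuous_on UNIV (\<lambda>y. \<phi> (t + y) - \<phi> y)"
        using cont_transl[OF cont, of t] cont by (intro continuous_intros)
      then have "(\<lambda>y. \<phi> (t + y) - \<phi> y) \<in> borel_measurable \<mu>" by (rule cont_meas)
      then show ?thesis
        using borel_measurable_continuous_on[OF continuous_on_norm_id] by (intro powr_real_measurable) auto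
    qed
    have ii: "integrable \<mu> (\<lambda>y. norm (\<phi> (t + y) - \<phi> y) powr p)"
    proof (rule Bochner_Integration.integrable_bound[OF bi mi])
      show "AE y in \<mu>. norm (norm (\<phi> (t + y) - \<phi> y) powr p) \<le> norm (\<epsilon> powr p * indicator C y)"
      proof (intro AE_I2)
        fix y
        have "0 \<le> \<epsilon> powr p * indicator C y" by simp
        then show "norm (norm (\<phi> (t + y) - \<phi> y) powr p) \<le> norm (\<epsilon> powr p * indicator C y)"
          using pw[of y] by simp
      qed
    qed
    have "(\<integral>y. norm (\<phi> (t + y) - \<phi> y) powr p \<partial>\<mu>) \<le> (\<integral>y. \<epsilon> powr p * indicator C y \<partial>\<mu>)"
      by (rule integral_mono[OF ii bi pw])
    also have "\<dots> = \<epsilon> powr p * mC" by (simp add: mC_def)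
    also have "\<dots> = e * mC / (2 * (mC + 1))" unfolding epp by simp
    also have "\<dots> < e"
    proof -
      have "e * mC < e * (2 * (mC + 1))" using e mC0 by (intro mult_strict_left_mono) auto
      then show ?thesis using e mC0 by (simp add: divide_less_eq)
    qed
    finally show "(\<integral>y. norm (\<phi> (t + y) - \<phi> y) powr p \<partial>\<mu>) < e" .
  qed
qed

end

context lc_haar
begin

lemma TC:
  assumes p: "1 \<le> p" and L: "in_Lp \<mu> p f" and e: "0 < e"
  obtains S where "open S" "0 \<in> S" "\<And>t. t \<in> S \<Longrightarrow> (\<integral>y. norm (f (t + y) - f y) powr p \<partial>\<mu>) < e"
proof -
  have p0: "0 < p" using p by simp
  define K where "K = 2 powr p * (1 + 2 * 2 powr p)"
  have K0: "K > 0" unfolding K_def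
    by (intro mult_pos_pos add_pos_nonneg) auto
  define \<delta> where "\<delta> = e / K"
  have d: "0 < \<delta>" using e K0 by (simp add: \<delta>_def)
  obtain \<phi> where \<phi>: "Cc \<phi>" "(\<integral>x. norm (f x - \<phi> x) powr p \<partial>\<mu>) < \<delta>"
    using approx_all[OF p L] d unfolding approx_def by blast
  have \<phi>L: "in_Lp \<mu> p \<phi>" by (rule Cc_Lp[OF \<phi>(1) p0])
  obtain S where S: "open S" "0 \<in> S" "\<And>t. t \<in> S \<Longrightarrow> (\<integral>y. norm (\<phi> (t + y) - \<phi> y) powr p \<partial>\<mu>) < \<delta>"
    using TC_Cc[OF \<phi>(1) p0 d] by blast
  show thesis
  proof (rule that[OF S(1,2)])
    fix t assume t: "t \<in> S"
    have dL: "in_Lp \<mu> p (\<lambda>x. f x - \<phi> x)" by (rule in_Lp_diff[OF p0 L \<phi>L])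
    have i1: "integrable \<mu> (\<lambda>y. norm (f (t + y) - \<phi> (t + y)) powr p)"
      using in_Lp_transl(1)[OF dL, of t] by (simp add: in_Lp_def)
    have e1: "(\<integral>y. norm (f (t + y) - \<phi> (t + y)) powr p \<partial>\<mu>) = (\<integral>x. norm (f x - \<phi> x) powr p \<partial>\<mu>)"
      using integral_transl[OF in_Lp_meas_powr[OF dL], of t] by simp
    have i2: "integrable \<mu> (\<lambda>y. norm (\<phi> (t + y) - \<phi> y) powr p)"
      using in_Lp_diff[OF p0 in_Lp_transl(1)[OF \<phi>L, of t] \<phi>L] by (simp add: in_Lp_def)
    have i3: "integrable \<mu> (\<lambda>y. norm (\<phi> y - f y) powr p)"
      using in_Lp_diff[OF p0 \<phi>L L] by (simp add: in_Lp_def)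
    have e3: "(\<integral>y. norm (\<phi> y - f y) powr p \<partial>\<mu>) = (\<integral>x. norm (f x - \<phi> x) powr p \<partial>\<mu>)"
      by (simp add: norm_minus_commute)
    have i0: "integrable \<mu> (\<lambda>y. norm (f (t + y) - f y) powr p)"
      using in_Lp_diff[OF p0 in_Lp_transl(1)[OF L, of t] L] by (simp add: in_Lp_def)
    define A where "A y = norm (f (t + y) - \<phi> (t + y)) powr p" for y
    define B where "B y = norm (\<phi> (t + y) - \<phi> y) powr p" for y
    define C where "C y = norm (\<phi> y - f y) powr p" for y
    have pw: "norm (f (t + y) - f y) powr p \<le> 2 powr p * (A y + 2 powr p * (B y + C y))" for y
    proof -
      have eq: "f (t + y) - f y = (f (t + y) - \<phi> (t + y)) + ((\<phi> (t + y) - \<phi> y) + (\<phi> y - f y))" by simp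
      have "norm (f (t + y) - f y) powr p \<le> 2 powr p * (A y + norm ((\<phi> (t + y) - \<phi> y) + (\<phi> y - f y)) powr p)"
        unfolding eq A_def by (rule norm_powr_add_le[OF p0])
      also have "\<dots> \<le> 2 powr p * (A y + 2 powr p * (B y + C y))"
        unfolding B_def C_def by (intro mult_left_mono add_left_mono norm_powr_add_le[OF p0]) auto
      finally show ?thesis .
    qed
    have iR: "integrable \<mu> (\<lambda>y. 2 powr p * (A y + 2 powr p * (B y + C y)))"
      using i1 i2 i3 unfolding A_def B_def C_def by simp
    have "(\<integral>y. norm (f (t + y) - f y) powr p \<partial>\<mu>) \<le> (\<integral>y. 2 powr p * (A y + 2 powr p * (B y + C y)) \<partial>\<mu>)"
      by (rule integral_mono[OF i0 iR pw])
    also have "\<dots> = 2 powr p * ((\<integral>y. A y \<partial>\<mu>) + 2 powr p * ((\<integral>y. B y \<partial>\<mu>) + (\<integral>y. C y \<partial>\<mu>)))"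
      using i1 i2 i3 unfolding A_def B_def C_def by simp
    also have "\<dots> < 2 powr p * (\<delta> + 2 powr p * (\<delta> + \<delta>))"
    proof -
      have a: "(\<integral>y. A y \<partial>\<mu>) < \<delta>" unfolding A_def e1 by (rule \<phi>(2))
      have b: "(\<integral>y. B y \<partial>\<mu>) < \<delta>" unfolding B_def by (rule S(3)[OF t])
      have c: "(\<integral>y. C y \<partial>\<mu>) < \<delta>" unfolding C_def e3 by (rule \<phi>(2))
      have "2 powr p * ((\<integral>y. B y \<partial>\<mu>) + (\<integral>y. C y \<partial>\<mu>)) < 2 powr p * (\<delta> + \<delta>)"
        using b c by (intro mult_strict_left_mono) auto
      then have "(\<integral>y. A y \<partial>\<mu>) + 2 powr p * ((\<integral>y. B y \<partial>\<mu>) + (\<integral>y. C y \<partial>\<mu>)) < \<delta> + 2 powr p * (\<delta> + \<delta>)"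
        by (rule add_strict_mono[OF a])
      then show ?thesis by (rule mult_strict_left_mono) simp
    qed
    also have "\<dots> = \<delta> * K" by (simp add: K_def algebra_simps)
    also have "\<dots> = e" using K0 by (simp add: \<delta>_def)
    finally show "(\<integral>y. norm (f (t + y) - f y) powr p \<partial>\<mu>) < e" .
  qed
qed

end

context lc_haar
begin

lemma conv_cont:
  assumes p: "1 < p" and f: "in_Lp \<mu> p f" and g: "in_Lp \<mu> (conj_exp p) g"
  shows "continuous_on UNIV (conv \<mu> g (check f))"
proof -
  define q where "q = conj_exp p"
  have hyp: "1 < p" "1 < q" "1/p + 1/q = 1"
    using p conj_exp_gt1 conj_exp_sum unfolding q_def by auto
  have p1: "1 \<le> p" and p0: "0 < p" using p by auto
  define h where "h = conv \<mu> g (check f)"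
  have gm: "g \<in> borel_measurable \<mu>" and gi: "integrable \<mu> (\<lambda>y. norm (g y) powr q)"
    using g unfolding in_Lp_def q_def by auto
  have "isCont h x0" for x0
    unfolding isCont_def tendsto_iff
  proof (intro allI impI)
    fix e :: real assume e: "0 < e"
    define G where "G = Lp_norm \<mu> q g"
    have G0: "G \<ge> 0" by (simp add: G_def Lp_norm_nonneg)
    define \<eta> where "\<eta> = (e / (G + 1)) powr p"
    have eta: "\<eta> > 0" using e G0 by (simp add: \<eta>_def)
    obtain S where S: "open S" "0 \<in> S" "\<And>t. t \<in> S \<Longrightarrow> (\<integral>y. norm (f (t + y) - f y) powr p \<partial>\<mu>) < \<eta>"
      using TC[OF p1 f eta] by blast
    define S' where "S' = (\<lambda>x. - x + x0) -` S"
    have oS': "open S'" unfolding S'_def by (intro open_vimage S(1) continuous_intros)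
    have xS': "x0 \<in> S'" using S(2) by (simp add: S'_def)
    show "\<forall>\<^sub>F x in at x0. dist (h x) (h x0) < e"
      unfolding eventually_at_topological
    proof (intro exI[of _ S'] conjI ballI impI oS' xS')
      fix x assume x: "x \<in> S'"
      define D where "D y = f (- x + y) - f (- x0 + y)" for y
      have DL: "in_Lp \<mu> p D"
        unfolding D_def by (rule in_Lp_diff[OF p0 in_Lp_transl(1)[OF f] in_Lp_transl(1)[OF f]])
      have Dm: "D \<in> borel_measurable \<mu>" using DL by (simp add: in_Lp_def)
      have int1: "integrable \<mu> (\<lambda>y. g y * f (- x + y))" using conv_bound(1)[OF p f g] .
      have int2: "integrable \<mu> (\<lambda>y. g y * f (- x0 + y))" using conv_bound(1)[OF p f g] .
      have "h x - h x0 = (\<integral>y. g y * f (- x + y) - g y * f (- x0 + y) \<partial>\<mu>)"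
        unfolding h_def conv_check by (rule Bochner_Integration.integral_diff[OF int1 int2, symmetric])
      also have "\<dots> = (\<integral>y. g y * D y \<partial>\<mu>)"
        by (rule Bochner_Integration.integral_cong[OF refl]) (simp add: D_def right_diff_distrib)
      finally have hd: "h x - h x0 = (\<integral>y. g y * D y \<partial>\<mu>)" .
      have a1: "(\<lambda>y. norm (D y)) \<in> borel_measurable \<mu>" "(\<lambda>y. norm (g y)) \<in> borel_measurable \<mu>"
        using borel_measurable_continuous_on[OF continuous_on_norm_id Dm]
          borel_measurable_continuous_on[OF continuous_on_norm_id gm] by auto
      have a2: "integrable \<mu> (\<lambda>y. norm (D y) powr p)" using DL by (simp add: in_Lp_def)
      note hh = holder_real[OF hyp a1 norm_ge_zero norm_ge_zero a2 gi]
      define I where "I = (\<integral>y. norm (D y) powr p \<partial>\<mu>)"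
      have I0: "I \<ge> 0" unfolding I_def by (intro integral_nonneg_AE) auto
      have "I = (\<integral>z. norm (D (x0 + z)) powr p \<partial>\<mu>)"
        unfolding I_def using integral_transl[OF in_Lp_meas_powr[OF DL], of x0] by simp
      also have "\<dots> = (\<integral>z. norm (f ((- x + x0) + z) - f z) powr p \<partial>\<mu>)"
        by (simp add: D_def add.assoc)
      also have "\<dots> < \<eta>" using S(3)[of "- x + x0"] x by (simp add: S'_def)
      finally have Ieta: "I < \<eta>" .
      have "I powr (1/p) < \<eta> powr (1/p)" using Ieta I0 p0 by (intro powr_less_mono2) auto
      also have "\<dots> = e / (G + 1)" using e G0 p0 by (simp add: \<eta>_def powr_powr)
      finally have Ip: "I powr (1/p) < e / (G + 1)" .
      have "dist (h x) (h x0) = norm (\<integral>y. g y * D y \<partial>\<mu>)" by (simp add: dist_norm hd)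
      also have "\<dots> \<le> (\<integral>y. norm (g y * D y) \<partial>\<mu>)" by (rule integral_norm_bound)
      also have "\<dots> = (\<integral>y. norm (D y) * norm (g y) \<partial>\<mu>)"
        by (rule Bochner_Integration.integral_cong[OF refl]) (simp add: norm_mult)
      also have "\<dots> \<le> I powr (1/p) * G"
        using hh(2) unfolding I_def G_def Lp_norm_def by simp
      also have "\<dots> \<le> e / (G + 1) * G" using Ip G0 by (intro mult_right_mono) auto
      also have "\<dots> < e"
      proof -
        have "e * G < e * (G + 1)" using e by simp
        then show ?thesis using G0 by (simp add: field_simps)
      qed
      finally show "dist (h x) (h x0) < e" .
    qed
  qed
  then show ?thesis unfolding h_def by (simp add: continuous_on_eq_continuous_at)
qed

lemma Ap_cont:
  assumes p: "1 < p" and v: "v \<in> Ap \<mu> p"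
  shows "continuous_on UNIV v"
proof -
  obtain f g where r: "Ap_rep \<mu> p v f g" using v unfolding Ap_def by auto
  have fi: "\<And>i. in_Lp \<mu> p (f i)" and gi: "\<And>i. in_Lp \<mu> (conj_exp p) (g i)"
    using r unfolding Ap_rep_def by auto
  have ul: "uniform_limit UNIV (\<lambda>n x. \<Sum>i<n. conv \<mu> (g i) (check (f i)) x)
      (\<lambda>x. \<Sum>i. conv \<mu> (g i) (check (f i)) x) sequentially"
    by (rule Weierstrass_m_test[OF Ap_rep_bounds(1)[OF p r] Ap_rep_bounds(2)[OF p r]])
  have "continuous_on UNIV (\<lambda>x. \<Sum>i. conv \<mu> (g i) (check (f i)) x)"
  proof (rule uniform_limit_theorem[OF _ ul])
    show "\<forall>\<^sub>F n in sequentially. continuous_on UNIV (\<lambda>x. \<Sum>i<n. conv \<mu> (g i) (check (f i)) x)"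
      using conv_cont[OF p fi gi] by (intro always_eventually allI continuous_on_sum) auto
  qed simp
  moreover have "v = (\<lambda>x. \<Sum>i. conv \<mu> (g i) (check (f i)) x)"
    using Ap_rep_bounds(5)[OF p r] by auto
  ultimately show ?thesis by simp
qed

end

context lc_haar
begin

lemma single_rep:
  assumes f0: "in_Lp \<mu> p f0" and g0: "in_Lp \<mu> (conj_exp p) g0"
  shows "Ap_rep \<mu> p (conv \<mu> g0 (check f0)) (\<lambda>i. if i = 0 then f0 else (\<lambda>_. 0)) (\<lambda>i. if i = 0 then g0 else (\<lambda>_. 0))"
    "(\<Sum>i. Lp_norm \<mu> p ((\<lambda>i. if i = 0 then f0 else (\<lambda>_. 0)) i) * Lp_norm \<mu> (conj_exp p) ((\<lambda>i. if i = 0 then g0 else (\<lambda>_. 0)) i))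
      = Lp_norm \<mu> p f0 * Lp_norm \<mu> (conj_exp p) g0"
proof -
  let ?F = "\<lambda>i::nat. if i = 0 then f0 else (\<lambda>_. 0)"
  let ?G = "\<lambda>i::nat. if i = 0 then g0 else (\<lambda>_. 0)"
  have z: "in_Lp \<mu> r (\<lambda>_. 0)" for r by (simp add: in_Lp_def)
  have zn: "Lp_norm \<mu> r (\<lambda>_. 0) = 0" for r by (simp add: Lp_norm_def)
  have seq: "(\<lambda>i. Lp_norm \<mu> p (?F i) * Lp_norm \<mu> (conj_exp p) (?G i))
      = (\<lambda>i. if i = 0 then Lp_norm \<mu> p f0 * Lp_norm \<mu> (conj_exp p) g0 else 0)"
    by (auto simp: zn)
  have s: "(\<lambda>i. Lp_norm \<mu> p (?F i) * Lp_norm \<mu> (conj_exp p) (?G i)) sums (Lp_norm \<mu> p f0 * Lp_norm \<mu> (conj_exp p) g0)"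
    unfolding seq using sums_single[of 0 "\<lambda>_. Lp_norm \<mu> p f0 * Lp_norm \<mu> (conj_exp p) g0"] by simp
  have cseq: "(\<lambda>i. conv \<mu> (?G i) (check (?F i)) x) = (\<lambda>i. if i = 0 then conv \<mu> g0 (check f0) x else 0)" for x
    by (auto simp: conv_def)
  have cs: "(\<lambda>i. conv \<mu> (?G i) (check (?F i)) x) sums conv \<mu> g0 (check f0) x" for x
    unfolding cseq using sums_single[of 0 "\<lambda>_. conv \<mu> g0 (check f0) x"] by simp
  show "Ap_rep \<mu> p (conv \<mu> g0 (check f0)) ?F ?G"
    unfolding Ap_rep_def using f0 g0 z s cs by (auto simp: sums_iff)
  show "(\<Sum>i. Lp_norm \<mu> p (?F i) * Lp_norm \<mu> (conj_exp p) (?G i)) = Lp_norm \<mu> p f0 * Lp_norm \<mu> (conj_exp p) g0"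
    using s by (simp add: sums_iff)
qed

lemma bump:
  fixes x0 :: 'a and V :: "'a set"
  assumes p: "1 < p" and V: "open V" "V \<noteq> {}" "emeasure \<mu> V < \<infinity>"
  defines "A \<equiv> (\<lambda>z. x0 + z) ` V" and "mV \<equiv> measure \<mu> V"
  defines "fV \<equiv> (\<lambda>y. complex_of_real (indicator V y))"
    and "gV \<equiv> (\<lambda>y. complex_of_real (indicator A y / mV))"
  shows "conv \<mu> gV (check fV) \<in> Ap \<mu> p" "Ap_norm \<mu> p (conv \<mu> gV (check fV)) \<le> 1"
    "conv \<mu> gV (check fV) x0 = 1"
    "\<And>x. A \<inter> (\<lambda>z. x + z) ` V = {} \<Longrightarrow> conv \<mu> gV (check fV) x = 0"
proof -
  define q where "q = conj_exp p"
  have hyp: "1 < q" "1/p + 1/q = 1" using p conj_exp_gt1 conj_exp_sum unfolding q_def by auto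
  have p0: "0 < p" using p by simp
  have Aeq: "A = (\<lambda>z. - x0 + z) -` V"
  proof (intro set_eqI iffI)
    fix y assume "y \<in> A" then show "y \<in> (\<lambda>z. - x0 + z) -` V" unfolding A_def by auto
  next
    fix y assume "y \<in> (\<lambda>z. - x0 + z) -` V"
    then have "- x0 + y \<in> V" by simp
    moreover have "y = x0 + (- x0 + y)" by simp
    ultimately show "y \<in> A" unfolding A_def by blast
  qed
  have Vb: "V \<in> sets borel" using V(1) by simp
  have oA: "open A" unfolding Aeq by (intro open_vimage V(1) continuous_intros)
  have Ab: "A \<in> sets borel" using oA by simp
  have Vm: "V \<in> sets \<mu>" "A \<in> sets \<mu>" using Vb Ab sets_mu by auto
  have eA: "emeasure \<mu> A = emeasure \<mu> V" unfolding A_def by (rule inv_mu[OF Vb])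
  have mA: "measure \<mu> A = mV" unfolding mV_def measure_def eA ..
  have eVr: "emeasure \<mu> V = ennreal mV" unfolding mV_def using V(3) by (intro emeasure_eq_ennreal_measure) simp
  have mpos: "mV > 0"
  proof -
    have "0 < emeasure \<mu> V" by (rule open_pos[OF V(1,2)])
    then show ?thesis unfolding eVr by simp
  qed
  have iV: "integrable \<mu> (indicator V :: 'a \<Rightarrow> real)" using Vm V(3) by (simp add: integrable_indicator_iff)
  have iA: "integrable \<mu> (indicator A :: 'a \<Rightarrow> real)" using Vm V(3) eA by (simp add: integrable_indicator_iff)
  have fpw: "norm (fV y) powr p = indicator V y" for y unfolding fV_def by (simp add: indicator_def)
  have gpw: "norm (gV y) powr q = indicator A y * (1 / mV) powr q" for y
    unfolding gV_def using mpos by (simp add: indicator_def norm_divide)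
  have fm: "fV \<in> borel_measurable \<mu>" unfolding fV_def
    by (rule borel_measurable_continuous_on[OF continuous_on_of_real_id borel_measurable_indicator[OF Vm(1)]])
  have gm: "gV \<in> borel_measurable \<mu>" unfolding gV_def
    using borel_measurable_indicator[OF Vm(2)] by (intro borel_measurable_continuous_on[OF continuous_on_of_real_id] borel_measurable_divide) auto
  have fL: "in_Lp \<mu> p fV" unfolding in_Lp_def fpw using fm iV by simp
  have gL: "in_Lp \<mu> q gV" unfolding in_Lp_def gpw using gm iA by simp
  have nf: "Lp_norm \<mu> p fV = mV powr (1/p)"
    unfolding Lp_norm_def fpw mV_def by simp
  have ng: "Lp_norm \<mu> q gV = mV powr (1/q) * (1 / mV)"
  proof -
    have "Lp_norm \<mu> q gV = (mV * (1 / mV) powr q) powr (1/q)"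
      unfolding Lp_norm_def gpw using mA by simp
    also have "\<dots> = mV powr (1/q) * ((1 / mV) powr q) powr (1/q)"
      using mpos by (simp add: powr_mult)
    also have "\<dots> = mV powr (1/q) * (1 / mV)"
      using mpos hyp by (simp add: powr_powr)
    finally show ?thesis .
  qed
  have prod: "Lp_norm \<mu> p fV * Lp_norm \<mu> q gV = 1"
  proof -
    have "Lp_norm \<mu> p fV * Lp_norm \<mu> q gV = mV powr (1/p + 1/q) / mV"
      unfolding nf ng using mpos by (simp add: powr_add)
    also have "\<dots> = 1" using hyp mpos by simp
    finally show ?thesis .
  qed
  note sr = single_rep[OF fL gL[unfolded q_def]]
  show "conv \<mu> gV (check fV) \<in> Ap \<mu> p" unfolding Ap_def using sr(1) by blast
  show "Ap_norm \<mu> p (conv \<mu> gV (check fV)) \<le> 1"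
    using Ap_norm_le_rep[OF p sr(1)] sr(2) prod unfolding q_def by simp
  have "conv \<mu> gV (check fV) x0 = (\<integral>y. gV y * fV (- x0 + y) \<partial>\<mu>)" by (rule conv_check)
  also have "\<dots> = (\<integral>y. complex_of_real (indicator A y / mV) \<partial>\<mu>)"
  proof (rule Bochner_Integration.integral_cong[OF refl])
    fix y
    have "(- x0 + y \<in> V) = (y \<in> A)" unfolding Aeq by simp
    then show "gV y * fV (- x0 + y) = complex_of_real (indicator A y / mV)"
      unfolding gV_def fV_def by (simp add: indicator_def)
  qed
  also have "\<dots> = 1" using mA mpos by simp
  finally show "conv \<mu> gV (check fV) x0 = 1" .
  fix x assume dj: "A \<inter> (\<lambda>z. x + z) ` V = {}"
  have "conv \<mu> gV (check fV) x = (\<integral>y. gV y * fV (- x + y) \<partial>\<mu>)" by (rule conv_check)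
  also have "\<dots> = (\<integral>y. 0 \<partial>\<mu>)"
  proof (rule Bochner_Integration.integral_cong[OF refl])
    fix y
    show "gV y * fV (- x + y) = 0"
    proof (cases "y \<in> A \<and> - x + y \<in> V")
      case True
      then have "y \<in> (\<lambda>z. x + z) ` V" by (metis add_minus_cancel image_eqI)
      then show ?thesis using dj True by blast
    next
      case False
      then show ?thesis unfolding gV_def fV_def by (auto simp: indicator_def)
    qed
  qed
  also have "\<dots> = 0" by simp
  finally show "conv \<mu> gV (check fV) x = 0" .
qed

end

theorem lemma4p1:
  fixes \<mu> :: "'a::{topological_group_add, t2_space} measure"
    and p :: real
    and u :: "'a \<Rightarrow> complex"
  assumes "lc_group TYPE('a)"
    and "left_haar \<mu>"
    and "1 < p"
    and "u \<in> Bp \<mu> p"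
    and "u \<noteq> (\<lambda>x. 0)"
    and "Ap_weakly_compact_op \<mu> p (\<lambda>v x. u x * v x)"
  shows "\<forall>x::'a. open {x}"
proof -
  interpret lc_haar \<mu>
    apply unfold_locales
     apply (rule assms(2))
    using assms(1) unfolding lc_group_def by simp
  have p: "1 < p" by (rule assms(3))
  obtain x0 where u0: "u x0 \<noteq> 0" using assms(5) by (meson ext)
  define X where "X = Ap_weak \<mu> p"
  define T where "T = (\<lambda>(v::'a \<Rightarrow> complex) x. u x * v x)"
  define Bl where "Bl = {v \<in> Ap \<mu> p. Ap_norm \<mu> p v \<le> 1}"
  define S where "S = X closure_of (T ` Bl)"
  have cS: "compactin X S"
    using assms(6) unfolding Ap_weakly_compact_op_def X_def S_def T_def Bl_def .
  define Sb where "Sb = {{v \<in> Ap \<mu> p. \<phi> v \<in> U} | \<phi> U. \<phi> \<in> Ap_dual \<mu> p \<and> open U}"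
  have Xdef: "X = topology_generated_by Sb" unfolding X_def Ap_weak_def Sb_def ..
  have ev_dual: "(\<lambda>v. v x) \<in> Ap_dual \<mu> p" for x
    unfolding Ap_dual_def
  proof (intro CollectI conjI)
    show "\<forall>v\<in>Ap \<mu> p. \<forall>w\<in>Ap \<mu> p. \<forall>a b. a * v x + b * w x = a * v x + b * w x" by simp
    show "\<exists>C. \<forall>v\<in>Ap \<mu> p. norm (v x) \<le> C * Ap_norm \<mu> p v"
      using point_bound[OF p] by (intro exI[of _ 1]) simp
  qed
  have ev_open_aux: "{v \<in> Ap \<mu> p. v x0 \<in> UNIV} \<in> Sb" unfolding Sb_def
    by (rule CollectI, rule exI[of _ "\<lambda>v. v x0"], rule exI[of _ UNIV]) (use ev_dual[of x0] in simp)
  have ev_open: "openin X {v \<in> Ap \<mu> p. v x \<in> U}" if "open U" for x U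
  proof -
    have "{v \<in> Ap \<mu> p. v x \<in> U} \<in> Sb" unfolding Sb_def
      by (rule CollectI, rule exI[of _ "\<lambda>v. v x"], rule exI[of _ U]) (use ev_dual[of x] that in simp)
    then show ?thesis unfolding Xdef openin_topology_generated_by_iff by (rule generate_topology_on.Basis)
  qed
  have topX: "topspace X = Ap \<mu> p"
  proof
    have "s \<subseteq> Ap \<mu> p" if "s \<in> Sb" for s
      using that unfolding Sb_def by (elim CollectE exE conjE) simp
    then show "topspace X \<subseteq> Ap \<mu> p" unfolding Xdef topology_generated_by_topspace by (rule Union_least)
    have "{v \<in> Ap \<mu> p. v x0 \<in> UNIV} \<in> Sb" using ev_open_aux .
    then show "Ap \<mu> p \<subseteq> topspace X" unfolding Xdef topology_generated_by_topspace by auto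
  qed
  have TAp: "T v \<in> Ap \<mu> p" if "v \<in> Ap \<mu> p" for v
    using assms(4) that unfolding Bp_def T_def by blast
  have ceval: "w x = c" if "w \<in> X closure_of E" "\<And>e. e \<in> E \<Longrightarrow> e x = c" for w E x c
  proof (rule ccontr)
    assume ne: "w x \<noteq> c"
    have cl: "w \<in> topspace X \<and> (\<forall>T. w \<in> T \<and> openin X T \<longrightarrow> (\<exists>y. y \<in> E \<and> y \<in> T))"
      by (rule iffD1[OF in_closure_of that(1)])
    then have wA: "w \<in> Ap \<mu> p" using topX by simp
    have o: "openin X {v \<in> Ap \<mu> p. v x \<in> - {c}}" by (rule ev_open) auto
    have m: "w \<in> {v \<in> Ap \<mu> p. v x \<in> - {c}}" using wA ne by simp
    have "\<exists>y. y \<in> E \<and> y \<in> {v \<in> Ap \<mu> p. v x \<in> - {c}}"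
      using mp[OF spec[OF conjunct2[OF cl], of "{v \<in> Ap \<mu> p. v x \<in> - {c}}"] conjI[OF m o]] .
    then obtain y where "y \<in> E" "y \<in> {v \<in> Ap \<mu> p. v x \<in> - {c}}" by (elim exE conjE)
    then show False using that(2) by auto
  qed
  obtain N0 N :: "'a set" where N0: "open N0" and N: "compact N" and "0 \<in> N0" "N0 \<subseteq> N"
  proof -
    have "\<exists>U K. openin euclidean U \<and> compactin euclidean K \<and> (0::'a) \<in> U \<and> U \<subseteq> K"
      using lc unfolding locally_compact_space_def by simp
    then show thesis using that by (auto simp: open_openin[symmetric] compactin_euclidean_iff)
  qed
  define Vs where "Vs = {V. open V \<and> (0::'a) \<in> V \<and> V \<subseteq> N0}"
  define bp where "bp V = conv \<mu> (\<lambda>y. complex_of_real (indicator ((\<lambda>z. x0 + z) ` V) y / measure \<mu> V))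
      (check (\<lambda>y. complex_of_real (indicator V y)))" for V
  have bpV: "bp V \<in> Bl" "bp V x0 = 1" "\<And>x. (\<lambda>z. x0 + z) ` V \<inter> (\<lambda>z. x + z) ` V = {} \<Longrightarrow> bp V x = 0"
    if V: "V \<in> Vs" for V
  proof -
    have oV: "open V" "V \<noteq> {}" using V unfolding Vs_def by auto
    have "emeasure \<mu> V \<le> emeasure \<mu> N"
      using V \<open>N0 \<subseteq> N\<close> N by (intro emeasure_mono) (auto simp: Vs_def sets_mu borel_compact)
    then have fV: "emeasure \<mu> V < \<infinity>" using compact_fin[OF N] by (rule le_less_trans)
    note b = bump[OF p oV fV, of x0]
    show "bp V \<in> Bl" unfolding Bl_def bp_def using b(1,2) by simp
    show "bp V x0 = 1" unfolding bp_def using b(3) .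
    show "\<And>x. (\<lambda>z. x0 + z) ` V \<inter> (\<lambda>z. x + z) ` V = {} \<Longrightarrow> bp V x = 0"
      unfolding bp_def using b(4) by blast
  qed
  define E where "E V = T ` bp ` {W \<in> Vs. W \<subseteq> V}" for V
  define F where "F V = X closure_of E V" for V
  have EAp: "E V \<subseteq> topspace X" for V
    unfolding E_def topX using bpV(1) TAp unfolding Bl_def by auto
  have N0V: "N0 \<in> Vs" using N0 \<open>0 \<in> N0\<close> unfolding Vs_def by auto
  have fipc: "\<forall>\<U>. (\<forall>C\<in>\<U>. closedin X C) \<and> (\<forall>\<F>. finite \<F> \<and> \<F> \<subseteq> \<U> \<longrightarrow> S \<inter> \<Inter> \<F> \<noteq> {}) \<longrightarrow> S \<inter> \<Inter> \<U> \<noteq> {}"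
    using iffD1[OF compactin_fip cS] by (rule conjunct2)
  have "S \<inter> \<Inter> (F ` Vs) \<noteq> {}"
  proof (rule mp[OF spec[OF fipc, of "F ` Vs"]], rule conjI)
    show "\<forall>C\<in>F ` Vs. closedin X C" unfolding F_def by auto
    show "\<forall>\<F>. finite \<F> \<and> \<F> \<subseteq> F ` Vs \<longrightarrow> S \<inter> \<Inter> \<F> \<noteq> {}"
    proof (intro allI impI)
      fix \<F> assume fF: "finite \<F> \<and> \<F> \<subseteq> F ` Vs"
      then obtain Ws where Ws: "Ws \<subseteq> Vs" "finite Ws" "\<F> = F ` Ws"
        by (meson finite_subset_image)
      define W0 where "W0 = N0 \<inter> \<Inter> Ws"
      have W0: "W0 \<in> Vs"
        unfolding W0_def Vs_def using Ws(1,2) N0 \<open>0 \<in> N0\<close> by (auto simp: Vs_def intro!: open_Int open_Inter)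
      have inS: "T (bp W0) \<in> S"
      proof -
        have "T (bp W0) \<in> T ` Bl" using bpV(1)[OF W0] by blast
        moreover have "T ` Bl \<subseteq> topspace X" using TAp unfolding topX Bl_def by auto
        ultimately show ?thesis unfolding S_def using closure_of_subset by blast
      qed
      have inF: "T (bp W0) \<in> F V" if "V \<in> Ws" for V
      proof -
        have "W0 \<subseteq> V" unfolding W0_def using that by auto
        then have "T (bp W0) \<in> E V" unfolding E_def using W0 by blast
        then show ?thesis unfolding F_def using closure_of_subset[OF EAp] by blast
      qed
      show "S \<inter> \<Inter> \<F> \<noteq> {}" using inS inF Ws(3) by blast
    qed
  qed
  then obtain w where wS: "w \<in> S" and wF: "\<And>V. V \<in> Vs \<Longrightarrow> w \<in> F V" by blast
  have "w \<in> topspace X" using wS unfolding S_def by (simp only: in_closure_of)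
  then have wAp: "w \<in> Ap \<mu> p" using topX by simp
  have wx0: "w x0 = u x0"
  proof (rule ceval[OF wF[OF N0V, unfolded F_def]])
    fix e assume "e \<in> E N0"
    then obtain W where W: "W \<in> Vs" "e = T (bp W)" unfolding E_def by blast
    show "e x0 = u x0" using bpV(2)[OF W(1)] W(2) unfolding T_def by simp
  qed
  have wx: "w x = 0" if xne: "x \<noteq> x0" for x
  proof -
    obtain A B where AB: "open A" "open B" "x0 \<in> A" "x \<in> B" "A \<inter> B = {}"
      using hausdorff[OF not_sym[OF xne]] by blast
    define V where "V = (\<lambda>z. x0 + z) -` A \<inter> (\<lambda>z. x + z) -` B \<inter> N0"
    have VV: "V \<in> Vs" unfolding Vs_def V_def
      using AB N0 \<open>0 \<in> N0\<close> by (auto intro!: open_Int open_vimage continuous_intros)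
    show "w x = 0"
    proof (rule ceval[OF wF[OF VV, unfolded F_def]])
      fix e assume "e \<in> E V"
      then obtain W where W: "W \<in> Vs" "W \<subseteq> V" "e = T (bp W)" unfolding E_def by blast
      have s1: "(\<lambda>z. x0 + z) ` W \<subseteq> A" "(\<lambda>z. x + z) ` W \<subseteq> B"
        using W(2) unfolding V_def by auto
      have "(\<lambda>z. x0 + z) ` W \<inter> (\<lambda>z. x + z) ` W = {}"
        using s1 AB(5) by blast
      then show "e x = 0" using bpV(3)[OF W(1)] W(3) unfolding T_def by simp
    qed
  qed
  have cw: "continuous_on UNIV w" by (rule Ap_cont[OF p wAp])
  have o0: "open {x0}"
  proof -
    have "{x0} = w -` (- {0})" using wx0 wx u0 by auto
    moreover have "open (w -` (- {0}))" by (rule open_vimage[OF open_Compl[OF closed_singleton] cw])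
    ultimately show ?thesis by simp
  qed
  show ?thesis
  proof
    fix x :: 'a
    have "{x} = (\<lambda>y. - (x + - x0) + y) -` {x0}"
    proof (intro set_eqI iffI)
      fix y assume "y \<in> {x}" then show "y \<in> (\<lambda>y. - (x + - x0) + y) -` {x0}"
        by (simp add: minus_add add.assoc)
    next
      fix y assume "y \<in> (\<lambda>y. - (x + - x0) + y) -` {x0}"
      then have "- (x + - x0) + y = x0" by simp
      then have "y = (x + - x0) + x0" by (metis add_minus_cancel)
      then show "y \<in> {x}" by (simp add: add.assoc)
    qed
    then show "open {x}" using open_vimage[OF o0, of "\<lambda>y. - (x + - x0) + y"]
      by (simp add: continuous_intros)
  qed
qed


end
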